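(* Assume the standing setup below. Then $A\setminus X$ admits no partition $A\setminus X=\{a',a\}\cup A_1\cup A_2$ (disjoint union) in which $a'$ covers $a$, every element of $A_1$ is above or incomparable to $a'$, every element of $A_2$ is below or incomparable to $a$, and $A_1$ and $A_2$ are both non-empty. The same holds for $C\setminus X$.
   Context: Standing setup: $\Gamma_n=\{A,B,C\}$ is a set of three pairwise non-isomorphic posets of size $n$, and $Q$ is a witness of $\Gamma_n$ (the set of isomorphism classes of downsets of $Q$ of size $n$ is exactly $\Gamma_n$). $G_n(Q)$ is the exchange graph: vertices are all downsets of $Q$ of size $n$ (as subsets), adjacent when they differ by exactly one element. A special path is a path $v_0,\ldots,v_r$ ($r\ge2$) in $G_n(Q)$ whose first vertex, internal vertices, and last vertex are isomorphic to three distinct members of $\Gamma_n$ respectively (all internal vertices isomorphic to the same member). Fix a special path of minimal length among all special paths in $G_n(Q)$, labelled so that $v_0\cong A$, $v_1,\ldots,v_{r-1}\cong B$, $v_r\cong C$; $A:=v_0$, $C:=v_r$ denote these specific downsets (anchor copies). Assume $Q$ equals the union of the vertices of this path. Let $X=A\cap C$ and $m=|A\setminus X|=|C\setminus X|$. Cover relations and comparabilities are those of $Q$. *)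

theory Defs
  imports Main
begin

text \<open>A finite poset is modelled as a carrier set with a relation (only its
restriction to the carrier matters).\<close>

definition is_poset :: "'a set \<Rightarrow> ('a \<Rightarrow> 'a \<Rightarrow> bool) \<Rightarrow> bool" where
  "is_poset S r \<longleftrightarrow> (\<forall>x\<in>S. r x x) \<and>
     (\<forall>x\<in>S. \<forall>y\<in>S. r x y \<and> r y x \<longrightarrow> x = y) \<and>
     (\<forall>x\<in>S. \<forall>y\<in>S. \<forall>z\<in>S. r x y \<and> r y z \<longrightarrow> r x z)"

definition ord_iso :: "'a set \<Rightarrow> ('a \<Rightarrow> 'a \<Rightarrow> bool) \<Rightarrow> 'b set \<Rightarrow> ('b \<Rightarrow> 'b \<Rightarrow> bool) \<Rightarrow> bool" where
  "ord_iso D r E s \<longleftrightarrow> (\<exists>f. bij_betw f D E \<and> (\<forall>x\<in>D. \<forall>y\<in>D. r x y \<longleftrightarrow> s (f x) (f y)))"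

definition downset :: "'a set \<Rightarrow> ('a \<Rightarrow> 'a \<Rightarrow> bool) \<Rightarrow> 'a set \<Rightarrow> bool" where
  "downset Q le D \<longleftrightarrow> D \<subseteq> Q \<and> (\<forall>x\<in>D. \<forall>y\<in>Q. le y x \<longrightarrow> y \<in> D)"

definition exch_vertices :: "'a set \<Rightarrow> ('a \<Rightarrow> 'a \<Rightarrow> bool) \<Rightarrow> nat \<Rightarrow> 'a set set" where
  "exch_vertices Q le n = {D. downset Q le D \<and> card D = n}"

definition exch_adj :: "'a set \<Rightarrow> 'a set \<Rightarrow> bool" where
  "exch_adj D E \<longleftrightarrow> card (D - E) = 1 \<and> card (E - D) = 1"

definition is_witness :: "'a set \<Rightarrow> ('a \<Rightarrow> 'a \<Rightarrow> bool) \<Rightarrow> nat \<Rightarrow> ('b set \<times> ('b \<Rightarrow> 'b \<Rightarrow> bool)) set \<Rightarrow> bool" where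
  "is_witness Q le n \<Gamma> \<longleftrightarrow>
     (\<forall>D\<in>exch_vertices Q le n. \<exists>P\<in>\<Gamma>. ord_iso D le (fst P) (snd P)) \<and>
     (\<forall>P\<in>\<Gamma>. \<exists>D\<in>exch_vertices Q le n. ord_iso D le (fst P) (snd P))"

text \<open>A special path v_0,...,v_r (r >= 2), given as the list of its vertices.\<close>
definition special_path :: "'a set \<Rightarrow> ('a \<Rightarrow> 'a \<Rightarrow> bool) \<Rightarrow> nat \<Rightarrow> ('b set \<times> ('b \<Rightarrow> 'b \<Rightarrow> bool)) set \<Rightarrow> 'a set list \<Rightarrow> bool" where
  "special_path Q le n \<Gamma> vs \<longleftrightarrow>
     length vs \<ge> 3 \<and> distinct vs \<and> set vs \<subseteq> exch_vertices Q le n \<and>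
     (\<forall>i. Suc i < length vs \<longrightarrow> exch_adj (vs ! i) (vs ! Suc i)) \<and>
     (\<exists>P1\<in>\<Gamma>. \<exists>P2\<in>\<Gamma>. \<exists>P3\<in>\<Gamma>. P1 \<noteq> P2 \<and> P2 \<noteq> P3 \<and> P1 \<noteq> P3 \<and>
        ord_iso (hd vs) le (fst P1) (snd P1) \<and>
        (\<forall>i. 0 < i \<and> i < length vs - 1 \<longrightarrow> ord_iso (vs ! i) le (fst P2) (snd P2)) \<and>
        ord_iso (last vs) le (fst P3) (snd P3))"

definition covers :: "'a set \<Rightarrow> ('a \<Rightarrow> 'a \<Rightarrow> bool) \<Rightarrow> 'a \<Rightarrow> 'a \<Rightarrow> bool" where
  "covers Q le a' a \<longleftrightarrow> a \<in> Q \<and> a' \<in> Q \<and> le a a' \<and> a \<noteq> a' \<and>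
     \<not> (\<exists>z\<in>Q. le a z \<and> le z a' \<and> z \<noteq> a \<and> z \<noteq> a')"

definition incomparable :: "('a \<Rightarrow> 'a \<Rightarrow> bool) \<Rightarrow> 'a \<Rightarrow> 'a \<Rightarrow> bool" where
  "incomparable le x y \<longleftrightarrow> \<not> le x y \<and> \<not> le y x"

definition bad_partition :: "'a set \<Rightarrow> ('a \<Rightarrow> 'a \<Rightarrow> bool) \<Rightarrow> 'a set \<Rightarrow> bool" where
  "bad_partition Q le S \<longleftrightarrow> (\<exists>a' a A1 A2.
     a' \<noteq> a \<and> a' \<notin> A1 \<and> a' \<notin> A2 \<and> a \<notin> A1 \<and> a \<notin> A2 \<and> A1 \<inter> A2 = {} \<and>
     S = {a', a} \<union> A1 \<union> A2 \<and>
     covers Q le a' a \<and>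
     (\<forall>x\<in>A1. le a' x \<or> incomparable le x a') \<and>
     (\<forall>x\<in>A2. le x a \<or> incomparable le x a) \<and>
     A1 \<noteq> {} \<and> A2 \<noteq> {})"

end

theory Submission
  imports Defs
begin

lemma core_seg:
  fixes f :: "nat \<Rightarrow> 'c"
  shows "s < e \<Longrightarrow> f s \<noteq> f e \<Longrightarrow> s \<le> p \<Longrightarrow> p \<le> e \<Longrightarrow> f p \<noteq> f s \<Longrightarrow> f p \<noteq> f e \<Longrightarrow>
    \<exists>i j. s \<le> i \<and> i + 2 \<le> j \<and> j \<le> e \<and> f i \<noteq> f j \<and> (\<forall>k. i < k \<and> k < j \<longrightarrow> f k = f (Suc i))
       \<and> f (Suc i) \<noteq> f i \<and> f (Suc i) \<noteq> f j"
proof (induction "e - s" arbitrary: s p rule: less_induct)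
  case less
  define j0 where "j0 = (LEAST x. s < x \<and> f x \<noteq> f s)"
  have ex0: "s < e \<and> f e \<noteq> f s" using less by auto
  have j0: "s < j0" "f j0 \<noteq> f s" using LeastI[of "\<lambda>x. s < x \<and> f x \<noteq> f s", OF ex0] j0_def by auto
  have j0le: "j0 \<le> e" using Least_le[of "\<lambda>x. s < x \<and> f x \<noteq> f s", OF ex0] j0_def by auto
  have bef: "\<And>x. s < x \<Longrightarrow> x < j0 \<Longrightarrow> f x = f s"
    using not_less_Least j0_def by blast
  have fj1: "f (j0 - 1) = f s"
    using bef j0 by (cases "j0 - 1 = s") auto
  show ?case
  proof (cases "f j0 = f e")
    case False
    have ex1: "j0 < e \<and> f e \<noteq> f j0" using False j0le by (metis le_neq_implies_less)
    define k where "k = (LEAST x. j0 < x \<and> f x \<noteq> f j0)"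
    have k: "j0 < k" "f k \<noteq> f j0" using LeastI[of "\<lambda>x. j0 < x \<and> f x \<noteq> f j0", OF ex1] k_def by auto
    have kle: "k \<le> e" using Least_le[of "\<lambda>x. j0 < x \<and> f x \<noteq> f j0", OF ex1] k_def by auto
    have mid: "\<And>x. j0 < x \<Longrightarrow> x < k \<Longrightarrow> f x = f j0"
      using not_less_Least k_def by blast
    show ?thesis
    proof (cases "f k = f s")
      case False
      obtain i where i: "j0 = Suc i" using j0 by (metis less_imp_Suc_add)
      have fi: "f i = f s" using fj1 i by simp
      have "\<forall>x. i < x \<and> x < k \<longrightarrow> f x = f (Suc i)"
      proof (intro allI impI)
        fix x assume "i < x \<and> x < k"
        then show "f x = f (Suc i)" using mid i by (cases "x = j0") auto
      qed
      moreover have "s \<le> i" using i j0 by simp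
      moreover have "i + 2 \<le> k" using i k by simp
      moreover have "f i \<noteq> f k" using fi False by simp
      moreover have "f (Suc i) \<noteq> f i" using i fi j0 by simp
      moreover have "f (Suc i) \<noteq> f k" using i k by simp
      ultimately show ?thesis using kle by blast
    next
      case True
      have "e - j0 < e - s" using j0 ex1 by auto
      moreover have "j0 < e" "f j0 \<noteq> f e" "j0 \<le> k" "k \<le> e" "f k \<noteq> f j0" "f k \<noteq> f e"
        using ex1 k kle True less by auto
      ultimately obtain i j where ij: "j0 \<le> i \<and> i + 2 \<le> j \<and> j \<le> e \<and> f i \<noteq> f j \<and> (\<forall>k. i < k \<and> k < j \<longrightarrow> f k = f (Suc i))
       \<and> f (Suc i) \<noteq> f i \<and> f (Suc i) \<noteq> f j"
        using less(1) by blast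
      moreover have "s \<le> i" using ij j0 by simp
      ultimately show ?thesis by blast
    qed
  next
    case True
    have pgt: "j0 < p"
    proof (rule ccontr)
      assume "\<not> j0 < p"
      then have "p \<le> j0" by simp
      moreover have "p \<noteq> s" using less by auto
      ultimately show False using bef less True
        by (metis le_neq_implies_less less.prems(3) order.not_eq_order_implies_strict)
    qed
    show ?thesis
    proof (cases "s < j0 - 1")
      case True
      have "e - (j0 - 1) < e - s" using True j0le by auto
      moreover have "j0 - 1 < e" "f (j0 - 1) \<noteq> f e" "j0 - 1 \<le> p" "p \<le> e" "f p \<noteq> f (j0 - 1)" "f p \<noteq> f e"
        using True fj1 less pgt j0le by auto
      ultimately obtain i j where ij: "j0 - 1 \<le> i \<and> i + 2 \<le> j \<and> j \<le> e \<and> f i \<noteq> f j \<and> (\<forall>k. i < k \<and> k < j \<longrightarrow> f k = f (Suc i))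
       \<and> f (Suc i) \<noteq> f i \<and> f (Suc i) \<noteq> f j"
        using less(1) by blast
      moreover have "s \<le> i" using ij True by simp
      ultimately show ?thesis by blast
    next
      case False
      then have js: "j0 = Suc s" using j0 by auto
      have ex2: "j0 < p \<and> f p \<noteq> f e" using pgt less by auto
      define k where "k = (LEAST x. j0 < x \<and> f x \<noteq> f e)"
      have k: "j0 < k" "f k \<noteq> f e" using LeastI[of "\<lambda>x. j0 < x \<and> f x \<noteq> f e", OF ex2] k_def by auto
      have kle: "k \<le> p" using Least_le[of "\<lambda>x. j0 < x \<and> f x \<noteq> f e", OF ex2] k_def by auto
      have mid: "\<And>x. j0 < x \<Longrightarrow> x < k \<Longrightarrow> f x = f e"
        using not_less_Least k_def by blast
      show ?thesis
      proof (cases "f k = f s")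
        case False
        have "\<forall>x. s < x \<and> x < k \<longrightarrow> f x = f (Suc s)"
        proof (intro allI impI)
          fix x assume "s < x \<and> x < k"
          then show "f x = f (Suc s)" using mid js \<open>f j0 = f e\<close> by (cases "x = j0") auto
        qed
        moreover have "s + 2 \<le> k" using js k by simp
        moreover have "f s \<noteq> f k" using False by simp
        moreover have "f (Suc s) \<noteq> f s" using js j0 by simp
        moreover have "f (Suc s) \<noteq> f k" using js k \<open>f j0 = f e\<close> by simp
        moreover have "k \<le> e" using kle less by simp
        ultimately show ?thesis by blast
      next
        case True
        have "e - k < e - s" using k js kle less.prems by auto
        moreover have "k < e"
        proof -
          have "k \<le> e" using kle less.prems by simp
          moreover have "k \<noteq> e" using True less.prems by auto
          ultimately show ?thesis by simp
        qed
        moreover have "f k \<noteq> f e" "k \<le> p" "p \<le> e" "f p \<noteq> f k" "f p \<noteq> f e"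
          using True k kle less.prems by auto
        ultimately obtain i j where ij: "k \<le> i \<and> i + 2 \<le> j \<and> j \<le> e \<and> f i \<noteq> f j \<and> (\<forall>k. i < k \<and> k < j \<longrightarrow> f k = f (Suc i))
         \<and> f (Suc i) \<noteq> f i \<and> f (Suc i) \<noteq> f j"
          using less(1) by blast
        moreover have "s \<le> i" using ij k js by simp
        ultimately show ?thesis by blast
      qed
    qed
  qed
qed


definition cpairs :: "'x set \<Rightarrow> ('x \<Rightarrow> 'x \<Rightarrow> bool) \<Rightarrow> nat" where
  "cpairs D r = card {(x,y). x \<in> D \<and> y \<in> D \<and> r x y}"

lemma ord_iso_cpairs:
  assumes "ord_iso D r E s" shows "cpairs D r = cpairs E s"
proof -
  obtain f where f: "bij_betw f D E" and pr: "\<forall>x\<in>D. \<forall>y\<in>D. r x y \<longleftrightarrow> s (f x) (f y)"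
    using assms unfolding ord_iso_def by blast
  let ?g = "\<lambda>(x,y). (f x, f y)"
  have inj: "inj_on ?g {(x,y). x \<in> D \<and> y \<in> D \<and> r x y}"
    using f unfolding bij_betw_def inj_on_def by auto
  have img: "?g ` {(x,y). x \<in> D \<and> y \<in> D \<and> r x y} = {(x,y). x \<in> E \<and> y \<in> E \<and> s x y}"
  proof
    show "?g ` {(x,y). x \<in> D \<and> y \<in> D \<and> r x y} \<subseteq> {(x,y). x \<in> E \<and> y \<in> E \<and> s x y}"
      using f pr unfolding bij_betw_def by auto
  next
    show "{(x,y). x \<in> E \<and> y \<in> E \<and> s x y} \<subseteq> ?g ` {(x,y). x \<in> D \<and> y \<in> D \<and> r x y}"
    proof
      fix p assume "p \<in> {(x,y). x \<in> E \<and> y \<in> E \<and> s x y}"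
      then obtain x y where p: "p = (x,y)" "x \<in> E" "y \<in> E" "s x y" by auto
      obtain x' where x': "x' \<in> D" "f x' = x" using f p unfolding bij_betw_def by auto
      obtain y' where y': "y' \<in> D" "f y' = y" using f p unfolding bij_betw_def by auto
      have "r x' y'" using pr x' y' p by auto
      then show "p \<in> ?g ` {(x,y). x \<in> D \<and> y \<in> D \<and> r x y}"
        using x' y' p by (auto intro!: image_eqI[of _ _ "(x',y')"])
    qed
  qed
  show ?thesis unfolding cpairs_def using card_image[OF inj] img by simp
qed

lemma ord_iso_trans2:
  assumes "ord_iso D r E s" "ord_iso D r E' s'" shows "ord_iso E s E' s'"
proof -
  obtain f where f: "bij_betw f D E" and pf: "\<forall>x\<in>D. \<forall>y\<in>D. r x y \<longleftrightarrow> s (f x) (f y)"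
    using assms(1) unfolding ord_iso_def by blast
  obtain g where g: "bij_betw g D E'" and pg: "\<forall>x\<in>D. \<forall>y\<in>D. r x y \<longleftrightarrow> s' (g x) (g y)"
    using assms(2) unfolding ord_iso_def by blast
  let ?h = "g \<circ> inv_into D f"
  have b: "bij_betw ?h E E'"
    using bij_betw_trans[OF bij_betw_inv_into[OF f] g] .
  have "\<forall>x\<in>E. \<forall>y\<in>E. s x y \<longleftrightarrow> s' (?h x) (?h y)"
  proof (intro ballI)
    fix x y assume xy: "x \<in> E" "y \<in> E"
    have ix: "inv_into D f x \<in> D" "f (inv_into D f x) = x"
      using xy f by (auto simp: bij_betw_def inv_into_into f_inv_into_f)
    have iy: "inv_into D f y \<in> D" "f (inv_into D f y) = y"
      using xy f by (auto simp: bij_betw_def inv_into_into f_inv_into_f)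
    show "s x y \<longleftrightarrow> s' (?h x) (?h y)"
      using pf pg ix iy by (metis comp_apply)
  qed
  then show ?thesis unfolding ord_iso_def using b by blast
qed

lemma exch_adj_sym: "exch_adj D E \<Longrightarrow> exch_adj E D"
  unfolding exch_adj_def by simp


locale L16 =
  fixes Q :: "'a set" and le :: "'a \<Rightarrow> 'a \<Rightarrow> bool" and n :: nat
    and \<Gamma> :: "('b set \<times> ('b \<Rightarrow> 'b \<Rightarrow> bool)) set" and vs :: "'a set list"
  assumes finQ: "finite Q"
    and posQ: "is_poset Q le"
    and \<Gamma>_noniso: "\<forall>P\<in>\<Gamma>. \<forall>P'\<in>\<Gamma>. P \<noteq> P' \<longrightarrow> \<not> ord_iso (fst P) (snd P) (fst P') (snd P')"
    and wit: "is_witness Q le n \<Gamma>"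
    and sp: "special_path Q le n \<Gamma> vs"
    and minimal: "\<forall>ws. special_path Q le n \<Gamma> ws \<longrightarrow> length vs \<le> length ws"
begin

abbreviation V where "V \<equiv> exch_vertices Q le n"

lemma prefl: "x \<in> Q \<Longrightarrow> le x x" using posQ unfolding is_poset_def by blast
lemma pantisym: "x \<in> Q \<Longrightarrow> y \<in> Q \<Longrightarrow> le x y \<Longrightarrow> le y x \<Longrightarrow> x = y"
  using posQ unfolding is_poset_def by blast
lemma ptrans: "x \<in> Q \<Longrightarrow> y \<in> Q \<Longrightarrow> z \<in> Q \<Longrightarrow> le x y \<Longrightarrow> le y z \<Longrightarrow> le x z"
  using posQ unfolding is_poset_def by blast

lemma V_ds: "D \<in> V \<Longrightarrow> downset Q le D" unfolding exch_vertices_def by simp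
lemma V_card: "D \<in> V \<Longrightarrow> card D = n" unfolding exch_vertices_def by simp
lemma V_sub: "D \<in> V \<Longrightarrow> D \<subseteq> Q" unfolding exch_vertices_def downset_def by simp
lemma V_fin: "D \<in> V \<Longrightarrow> finite D" using V_sub finQ finite_subset by blast
lemma ds_sub: "downset Q le D \<Longrightarrow> D \<subseteq> Q" unfolding downset_def by simp
lemma ds_down: "downset Q le D \<Longrightarrow> x \<in> D \<Longrightarrow> y \<in> Q \<Longrightarrow> le y x \<Longrightarrow> y \<in> D"
  unfolding downset_def by blast
lemma V_I: "downset Q le D \<Longrightarrow> card D = n \<Longrightarrow> D \<in> V" unfolding exch_vertices_def by simp

lemma ds_remove:
  assumes "downset Q le D" "\<forall>y\<in>D. le z y \<longrightarrow> y = z"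
  shows "downset Q le (D - {z})"
  using assms unfolding downset_def by blast

lemma ds_insert:
  assumes "downset Q le D" "t \<in> Q" "\<forall>y\<in>Q. le y t \<longrightarrow> y = t \<or> y \<in> D"
  shows "downset Q le (insert t D)"
  using assms unfolding downset_def by blast

lemma ds_Un: "downset Q le D \<Longrightarrow> downset Q le E \<Longrightarrow> downset Q le (D \<union> E)"
  unfolding downset_def by blast
lemma ds_Int: "downset Q le D \<Longrightarrow> downset Q le E \<Longrightarrow> downset Q le (D \<inter> E)"
  unfolding downset_def by blast

lemma ex_minimal:
  assumes "finite S" "S \<noteq> {}" "S \<subseteq> Q"
  shows "\<exists>x\<in>S. \<forall>y\<in>S. le y x \<longrightarrow> y = x"
proof -
  obtain x0 where "x0 \<in> S" using assms by blast
  then obtain x where x: "x \<in> S" and xm: "\<forall>y. y \<in> S \<longrightarrow> card {z\<in>S. le z x} \<le> card {z\<in>S. le z y}"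
    using ex_has_least_nat[of "\<lambda>x. x \<in> S" x0 "\<lambda>x. card {z\<in>S. le z x}"] by blast
  have "\<forall>y\<in>S. le y x \<longrightarrow> y = x"
  proof (intro ballI impI, rule ccontr)
    fix y assume y: "y \<in> S" "le y x" "y \<noteq> x"
    have xQ: "x \<in> Q" "y \<in> Q" using x y assms(3) by auto
    have sub: "{z\<in>S. le z y} \<subseteq> {z\<in>S. le z x}"
    proof
      fix w assume w: "w \<in> {z\<in>S. le z y}"
      then have "w \<in> Q" using assms(3) by auto
      then have "le w x" using ptrans[of w y x] w xQ y(2) by auto
      then show "w \<in> {z\<in>S. le z x}" using w by auto
    qed
    have "x \<notin> {z\<in>S. le z y}"
    proof
      assume "x \<in> {z\<in>S. le z y}"
      then have "le x y" by simp
      then show False using pantisym[of x y] xQ y by simp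
    qed
    moreover have "x \<in> {z\<in>S. le z x}" using x xQ prefl by simp
    ultimately have ps: "{z\<in>S. le z y} \<subset> {z\<in>S. le z x}" using sub by blast
    have "finite {z\<in>S. le z x}" using assms(1) by simp
    then have "card {z\<in>S. le z y} < card {z\<in>S. le z x}" using ps by (rule psubset_card_mono)
    moreover have "card {z\<in>S. le z x} \<le> card {z\<in>S. le z y}" using xm y(1) by blast
    ultimately show False by linarith
  qed
  then show ?thesis using x by blast
qed

lemma ex_maximal:
  assumes "finite S" "S \<noteq> {}" "S \<subseteq> Q"
  shows "\<exists>x\<in>S. \<forall>y\<in>S. le x y \<longrightarrow> y = x"
proof -
  obtain x0 where "x0 \<in> S" using assms by blast
  then obtain x where x: "x \<in> S" and xm: "\<forall>y. y \<in> S \<longrightarrow> card {z\<in>S. le x z} \<le> card {z\<in>S. le y z}"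
    using ex_has_least_nat[of "\<lambda>x. x \<in> S" x0 "\<lambda>x. card {z\<in>S. le x z}"] by blast
  have "\<forall>y\<in>S. le x y \<longrightarrow> y = x"
  proof (intro ballI impI, rule ccontr)
    fix y assume y: "y \<in> S" "le x y" "y \<noteq> x"
    have xQ: "x \<in> Q" "y \<in> Q" using x y assms(3) by auto
    have sub: "{z\<in>S. le y z} \<subseteq> {z\<in>S. le x z}"
    proof
      fix w assume w: "w \<in> {z\<in>S. le y z}"
      then have "w \<in> Q" using assms(3) by auto
      then have "le x w" using ptrans[of x y w] w xQ y(2) by auto
      then show "w \<in> {z\<in>S. le x z}" using w by auto
    qed
    have "x \<notin> {z\<in>S. le y z}"
    proof
      assume "x \<in> {z\<in>S. le y z}"
      then have "le y x" by simp
      then show False using pantisym[of x y] xQ y by simp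
    qed
    moreover have "x \<in> {z\<in>S. le x z}" using x xQ prefl by simp
    ultimately have ps: "{z\<in>S. le y z} \<subset> {z\<in>S. le x z}" using sub by blast
    have "finite {z\<in>S. le x z}" using assms(1) by simp
    then have "card {z\<in>S. le y z} < card {z\<in>S. le x z}" using ps by (rule psubset_card_mono)
    moreover have "card {z\<in>S. le x z} \<le> card {z\<in>S. le y z}" using xm y(1) by blast
    ultimately show False by linarith
  qed
  then show ?thesis using x by blast
qed

definition h :: "'a \<Rightarrow> nat" where "h z = card {x\<in>Q. le x z}"

lemma h_mono: "x \<in> Q \<Longrightarrow> y \<in> Q \<Longrightarrow> le x y \<Longrightarrow> h x \<le> h y"
proof -
  assume a: "x \<in> Q" "y \<in> Q" "le x y"
  have "{w\<in>Q. le w x} \<subseteq> {w\<in>Q. le w y}"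
  proof
    fix w assume "w \<in> {w\<in>Q. le w x}"
    then show "w \<in> {w\<in>Q. le w y}" using ptrans[of w x y] a by auto
  qed
  then show ?thesis unfolding h_def using finQ by (simp add: card_mono)
qed

lemma h_strict: "x \<in> Q \<Longrightarrow> y \<in> Q \<Longrightarrow> le x y \<Longrightarrow> x \<noteq> y \<Longrightarrow> h x < h y"
proof -
  assume a: "x \<in> Q" "y \<in> Q" "le x y" "x \<noteq> y"
  have "{w\<in>Q. le w x} \<subset> {w\<in>Q. le w y}"
  proof
    show "{w\<in>Q. le w x} \<subseteq> {w\<in>Q. le w y}"
    proof
      fix w assume "w \<in> {w\<in>Q. le w x}"
      then show "w \<in> {w\<in>Q. le w y}" using ptrans[of w x y] a by auto
    qed
    have "y \<in> {w\<in>Q. le w y}" using a prefl by blast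
    moreover have "y \<notin> {w\<in>Q. le w x}" using a pantisym[of x y] by auto
    ultimately show "{w\<in>Q. le w x} \<noteq> {w\<in>Q. le w y}" by blast
  qed
  then show ?thesis unfolding h_def using finQ by (simp add: psubset_card_mono)
qed

lemma cp_remove:
  assumes D: "downset Q le D" and z: "z \<in> D" and mx: "\<forall>y\<in>D. le z y \<longrightarrow> y = z"
  shows "cpairs D le = cpairs (D - {z}) le + h z"
proof -
  have DQ: "D \<subseteq> Q" using D ds_sub by blast
  have fD: "finite D" using DQ finQ finite_subset by blast
  let ?S = "{(x,y). x \<in> D \<and> y \<in> D \<and> le x y}"
  let ?S1 = "{(x,y). x \<in> D - {z} \<and> y \<in> D - {z} \<and> le x y}"
  let ?S2 = "(\<lambda>x. (x,z)) ` {x\<in>Q. le x z}"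
  have eq: "?S = ?S1 \<union> ?S2"
  proof
    show "?S \<subseteq> ?S1 \<union> ?S2"
    proof
      fix p assume "p \<in> ?S"
      then obtain x y where p: "p = (x,y)" "x \<in> D" "y \<in> D" "le x y" by blast
      show "p \<in> ?S1 \<union> ?S2"
      proof (cases "y = z")
        case True then show ?thesis using p DQ by blast
      next
        case False
        then have "x \<noteq> z" using mx p by blast
        then show ?thesis using p False by blast
      qed
    qed
  next
    show "?S1 \<union> ?S2 \<subseteq> ?S" using z D ds_down by blast
  qed
  have "?S1 \<subseteq> D \<times> D" by auto
  then have fS1: "finite ?S1" using fD finite_subset by blast
  have fS2: "finite ?S2" using finQ by simp
  have disj: "?S1 \<inter> ?S2 = {}" by blast
  have c2: "card ?S2 = h z" unfolding h_def by (simp add: card_image inj_on_def)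
  have "card ?S = card ?S1 + card ?S2" using eq card_Un_disjoint[OF fS1 fS2 disj] by simp
  then show ?thesis unfolding cpairs_def using c2 by simp
qed

definition cls where "cls D = (SOME P. P \<in> \<Gamma> \<and> ord_iso D le (fst P) (snd P))"

lemma cls: "D \<in> V \<Longrightarrow> cls D \<in> \<Gamma> \<and> ord_iso D le (fst (cls D)) (snd (cls D))"
proof -
  assume "D \<in> V"
  then have "\<exists>P. P \<in> \<Gamma> \<and> ord_iso D le (fst P) (snd P)" using wit unfolding is_witness_def by blast
  then show ?thesis unfolding cls_def by (rule someI_ex)
qed

lemma cls_unique: "D \<in> V \<Longrightarrow> P \<in> \<Gamma> \<Longrightarrow> ord_iso D le (fst P) (snd P) \<Longrightarrow> cls D = P"
proof (rule ccontr)
  assume a: "D \<in> V" "P \<in> \<Gamma>" "ord_iso D le (fst P) (snd P)" "cls D \<noteq> P"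
  have "ord_iso (fst (cls D)) (snd (cls D)) (fst P) (snd P)"
    using ord_iso_trans2 cls[OF a(1)] a(3) by blast
  then show False using \<Gamma>_noniso cls[OF a(1)] a(2) a(4) by blast
qed

lemma cls_cpairs: "D \<in> V \<Longrightarrow> D' \<in> V \<Longrightarrow> cls D = cls D' \<Longrightarrow> cpairs D le = cpairs D' le"
  using cls ord_iso_cpairs by metis

definition r where "r = length vs - 1"
definition AA where "AA = hd vs"
definition CC where "CC = last vs"
definition XX where "XX = AA \<inter> CC"
definition PP where "PP = AA - CC"
definition RR where "RR = CC - AA"
definition m where "m = card PP"

lemma sp_len: "3 \<le> length vs" using sp unfolding special_path_def by simp
lemma sp_dist: "distinct vs" using sp unfolding special_path_def by simp
lemma sp_set: "set vs \<subseteq> V" using sp unfolding special_path_def by simp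
lemma sp_adj: "Suc i < length vs \<Longrightarrow> exch_adj (vs ! i) (vs ! Suc i)"
  using sp unfolding special_path_def by simp
lemma sp_nth: "i < length vs \<Longrightarrow> vs ! i \<in> V" using sp_set by auto
lemma r3: "2 \<le> r" using sp_len unfolding r_def by simp
lemma vs_ne: "vs \<noteq> []" using sp_len by auto
lemma hd_nth: "AA = vs ! 0" unfolding AA_def using vs_ne by (simp add: hd_conv_nth)
lemma last_nth: "CC = vs ! r" unfolding CC_def r_def using vs_ne by (simp add: last_conv_nth)
lemma AA_V: "AA \<in> V" using hd_nth sp_nth[of 0] vs_ne by simp
lemma CC_V: "CC \<in> V" using last_nth sp_nth[of r] sp_len unfolding r_def by simp

definition \<alpha> where "\<alpha> = cls AA"
definition \<beta> where "\<beta> = cls (vs ! 1)"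
definition \<gamma> where "\<gamma> = cls CC"

lemma classes: "\<alpha> \<noteq> \<beta> \<and> \<beta> \<noteq> \<gamma> \<and> \<alpha> \<noteq> \<gamma> \<and> (\<forall>i. 0 < i \<and> i < r \<longrightarrow> cls (vs ! i) = \<beta>)"
proof -
  obtain P1 P2 P3 where P: "P1 \<in> \<Gamma>" "P2 \<in> \<Gamma>" "P3 \<in> \<Gamma>" "P1 \<noteq> P2" "P2 \<noteq> P3" "P1 \<noteq> P3"
    "ord_iso (hd vs) le (fst P1) (snd P1)"
    "\<forall>i. 0 < i \<and> i < length vs - 1 \<longrightarrow> ord_iso (vs ! i) le (fst P2) (snd P2)"
    "ord_iso (last vs) le (fst P3) (snd P3)"
    using sp unfolding special_path_def by blast
  have a: "\<alpha> = P1" unfolding \<alpha>_def using cls_unique AA_V P unfolding AA_def by blast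
  have g: "\<gamma> = P3" unfolding \<gamma>_def using cls_unique CC_V P unfolding CC_def by blast
  have i: "\<forall>i. 0 < i \<and> i < r \<longrightarrow> cls (vs ! i) = P2"
  proof (intro allI impI)
    fix i assume i: "0 < i \<and> i < r"
    then have "i < length vs" unfolding r_def by auto
    then have "vs ! i \<in> V" using sp_nth by blast
    moreover have "ord_iso (vs ! i) le (fst P2) (snd P2)" using P(8) i unfolding r_def by blast
    ultimately show "cls (vs ! i) = P2" using cls_unique P(2) by blast
  qed
  have b: "\<beta> = P2" unfolding \<beta>_def using i r3 by simp
  show ?thesis using a b g i P by simp
qed

lemma no_short:
  fixes g :: "nat \<Rightarrow> 'a set"
  assumes gV: "\<forall>k\<le>l. g k \<in> V" and inj: "inj_on g {..l}"
    and adj: "\<forall>k<l. exch_adj (g k) (g (Suc k))"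
    and ends: "cls (g 0) \<noteq> cls (g l)" and p: "p \<le> l" "cls (g p) \<noteq> cls (g 0)" "cls (g p) \<noteq> cls (g l)"
    and lr: "l \<le> r"
  shows "l = r \<and> (\<forall>k. 0 < k \<and> k < l \<longrightarrow> cls (g k) = cls (g p))"
proof -
  define f where "f = (\<lambda>k. cls (g k))"
  have l0: "0 < l" using ends by (cases l) auto
  have e1: "f 0 \<noteq> f l" "f p \<noteq> f 0" "f p \<noteq> f l" using ends p unfolding f_def by auto
  have "\<exists>i j. 0 \<le> i \<and> i + 2 \<le> j \<and> j \<le> l \<and> f i \<noteq> f j \<and> (\<forall>k. i < k \<and> k < j \<longrightarrow> f k = f (Suc i))
       \<and> f (Suc i) \<noteq> f i \<and> f (Suc i) \<noteq> f j"
    by (rule core_seg[OF l0 e1(1) le0 p(1) e1(2) e1(3)])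
  then obtain i j where ij: "0 \<le> i" "i + 2 \<le> j" "j \<le> l" "f i \<noteq> f j"
    "\<forall>k. i < k \<and> k < j \<longrightarrow> f k = f (Suc i)" "f (Suc i) \<noteq> f i" "f (Suc i) \<noteq> f j"
    by blast
  define ws where "ws = map g [i..<Suc j]"
  have len: "length ws = Suc j - i" using ij(2) unfolding ws_def by simp
  have nth: "\<And>k. k < length ws \<Longrightarrow> ws ! k = g (i + k)" unfolding ws_def by (simp del: upt_Suc)
  have "special_path Q le n \<Gamma> ws"
    unfolding special_path_def
  proof (intro conjI)
    show "3 \<le> length ws" using len ij(2) by simp
    have "{i..<Suc j} \<subseteq> {..l}" using ij(3) by auto
    then have "inj_on g {i..<Suc j}" using inj_on_subset[OF inj] by blast
    then show "distinct ws" unfolding ws_def by (simp add: distinct_map del: upt_Suc)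
    show "set ws \<subseteq> V" unfolding ws_def using gV ij(3) by auto
    show "\<forall>k. Suc k < length ws \<longrightarrow> exch_adj (ws ! k) (ws ! Suc k)"
    proof (intro allI impI)
      fix k assume k: "Suc k < length ws"
      then have "ws ! k = g (i + k)" "ws ! Suc k = g (Suc (i + k))" using nth by auto
      moreover have "i + k < l" using k len ij(3) by simp
      ultimately show "exch_adj (ws ! k) (ws ! Suc k)" using adj by simp
    qed
    have hd: "hd ws = g i" unfolding ws_def using ij(2) by (simp add: upt_rec)
    have lst: "last ws = g j" unfolding ws_def using ij(2) by simp
    have iV: "g i \<in> V" "g j \<in> V" "g (Suc i) \<in> V" using gV ij(2,3) by auto
    show "\<exists>P1\<in>\<Gamma>. \<exists>P2\<in>\<Gamma>. \<exists>P3\<in>\<Gamma>. P1 \<noteq> P2 \<and> P2 \<noteq> P3 \<and> P1 \<noteq> P3 \<and>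
        ord_iso (hd ws) le (fst P1) (snd P1) \<and>
        (\<forall>k. 0 < k \<and> k < length ws - 1 \<longrightarrow> ord_iso (ws ! k) le (fst P2) (snd P2)) \<and>
        ord_iso (last ws) le (fst P3) (snd P3)"
    proof (intro bexI conjI)
      show "ord_iso (hd ws) le (fst (f i)) (snd (f i))" using hd cls iV unfolding f_def by simp
      show "ord_iso (last ws) le (fst (f j)) (snd (f j))" using lst cls iV unfolding f_def by simp
      show "\<forall>k. 0 < k \<and> k < length ws - 1 \<longrightarrow> ord_iso (ws ! k) le (fst (f (Suc i))) (snd (f (Suc i)))"
      proof (intro allI impI)
        fix k assume k: "0 < k \<and> k < length ws - 1"
        have "k < length ws" using k by auto
        then have "ws ! k = g (i + k)" using nth by blast
        moreover have "g (i + k) \<in> V" using gV k len ij(3) by auto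
        moreover have "f (i + k) = f (Suc i)"
        proof -
          have "i < i + k" "i + k < j" using k len ij(2) by auto
          then show ?thesis using ij(5) by blast
        qed
        ultimately show "ord_iso (ws ! k) le (fst (f (Suc i))) (snd (f (Suc i)))"
          using cls unfolding f_def by metis
      qed
      show "f i \<in> \<Gamma>" "f j \<in> \<Gamma>" "f (Suc i) \<in> \<Gamma>" using iV cls unfolding f_def by auto
      show "f i \<noteq> f (Suc i)" "f (Suc i) \<noteq> f j" "f i \<noteq> f j" using ij(4,6,7) by auto
    qed
  qed
  then have "length vs \<le> length ws" using minimal by blast
  then have "r \<le> j - i" using len unfolding r_def by simp
  then have ij0: "i = 0" "j = l" "l = r" using lr ij(1-3) by auto
  have pl: "0 < p" "p < l" using e1 p(1) by (auto intro: Nat.gr0I) (metis le_neq_implies_less)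
  have fp: "f p = f (Suc i)" using ij(5) ij0 pl by blast
  have "\<forall>k. 0 < k \<and> k < l \<longrightarrow> cls (g k) = cls (g p)"
  proof (intro allI impI)
    fix k assume "0 < k \<and> k < l"
    then have "f k = f (Suc i)" using ij(5) ij0 by blast
    then show "cls (g k) = cls (g p)" using fp unfolding f_def by simp
  qed
  then show ?thesis using ij0 by simp
qed

lemma F2:
  assumes "x \<in> V" "y \<in> V" "z \<in> V" "exch_adj x y" "exch_adj y z"
    "cls x \<noteq> cls y" "cls y \<noteq> cls z" "cls x \<noteq> cls z" "3 \<le> r"
  shows False
proof -
  let ?g = "\<lambda>k::nat. if k = 0 then x else if k = 1 then y else z"
  have inj: "inj_on ?g {..2}"
    unfolding inj_on_def using assms(6-8) by (auto simp: le_Suc_eq)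
  have "2 = r"
    using no_short[of 2 ?g 1] assms inj by (auto simp: le_Suc_eq numeral_2_eq_2 less_Suc_eq)
  then show False using assms by simp
qed

lemma dist:
  assumes "k \<le> j" "j < length vs" shows "card (vs ! k - vs ! j) \<le> j - k"
  using assms
proof (induction j)
  case 0 then show ?case by simp
next
  case (Suc j)
  show ?case
  proof (cases "k = Suc j")
    case True then show ?thesis by simp
  next
    case False
    then have kj: "k \<le> j" using Suc.prems by simp
    have ih: "card (vs ! k - vs ! j) \<le> j - k" using Suc.IH Suc.prems kj by simp
    have a: "exch_adj (vs ! j) (vs ! Suc j)" using sp_adj Suc.prems by simp
    have jl: "j < length vs" "k < length vs" using Suc.prems by auto
    have fin: "finite (vs ! k)" using V_fin sp_nth jl by blast
    have finj: "finite (vs ! j)" using V_fin sp_nth jl by blast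
    have "vs ! k - vs ! Suc j \<subseteq> (vs ! k - vs ! j) \<union> (vs ! j - vs ! Suc j)" by blast
    moreover have "finite ((vs ! k - vs ! j) \<union> (vs ! j - vs ! Suc j))" using fin finj by blast
    ultimately have "card (vs ! k - vs ! Suc j) \<le> card ((vs ! k - vs ! j) \<union> (vs ! j - vs ! Suc j))"
      by (rule card_mono[rotated])
    also have "\<dots> \<le> card (vs ! k - vs ! j) + card (vs ! j - vs ! Suc j)" by (rule card_Un_le)
    also have "\<dots> \<le> j - k + 1" using ih a unfolding exch_adj_def by simp
    finally show ?thesis using kj by simp
  qed
qed



definition grid where "grid D \<longleftrightarrow> D \<in> V \<and> XX \<subseteq> D \<and> D \<subseteq> AA \<union> CC"
definition lvl where "lvl D = card (D - AA)"

lemma AA_ds: "downset Q le AA" using AA_V V_ds by blast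
lemma CC_ds: "downset Q le CC" using CC_V V_ds by blast
lemma AA_Q: "AA \<subseteq> Q" using AA_V V_sub by blast
lemma CC_Q: "CC \<subseteq> Q" using CC_V V_sub by blast
lemma AA_fin: "finite AA" using AA_V V_fin by blast
lemma CC_fin: "finite CC" using CC_V V_fin by blast
lemma XX_ds: "downset Q le XX" unfolding XX_def using ds_Int AA_ds CC_ds by blast
lemma cardAA: "card AA = card XX + m"
proof -
  have "AA = XX \<union> PP" "XX \<inter> PP = {}" unfolding XX_def PP_def by auto
  then show ?thesis unfolding m_def using AA_fin by (simp add: card_Un_disjoint)
qed
lemma cardRR: "card RR = m"
proof -
  have "CC = XX \<union> RR" "XX \<inter> RR = {}" unfolding XX_def RR_def by auto
  then have "card CC = card XX + card RR" using CC_fin by (simp add: card_Un_disjoint)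
  moreover have "card CC = n" "card AA = n" using V_card AA_V CC_V by auto
  ultimately show ?thesis using cardAA by simp
qed
lemma n_eq: "n = card XX + m" using cardAA V_card AA_V by simp

lemma grid_V: "grid D \<Longrightarrow> D \<in> V" unfolding grid_def by simp
lemma grid_AA: "grid AA" unfolding grid_def XX_def using AA_V by auto
lemma grid_CC: "grid CC" unfolding grid_def XX_def using CC_V by auto
lemma lvl_AA: "lvl AA = 0" unfolding lvl_def by simp
lemma lvl_CC: "lvl CC = m" unfolding lvl_def using cardRR unfolding RR_def by simp

lemma grid_split: "grid D \<Longrightarrow> card (D \<inter> AA) + lvl D = n"
proof -
  assume g: "grid D"
  then have f: "finite D" using grid_V V_fin by blast
  have eq: "card D = card (D \<inter> AA) + card (D - AA)" using card_Int_Diff[OF f] .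
  have c: "card D = n" using V_card grid_V g by blast
  show ?thesis unfolding lvl_def using trans[OF eq[symmetric] c] .
qed

lemma grid_lvl_le: "grid D \<Longrightarrow> lvl D \<le> m"
proof -
  assume g: "grid D"
  then have "D - AA \<subseteq> RR" unfolding grid_def RR_def by auto
  then have "card (D - AA) \<le> card RR" using CC_fin unfolding RR_def by (simp add: card_mono)
  then show ?thesis unfolding lvl_def using cardRR by simp
qed

lemma grid_lvl0: "grid D \<Longrightarrow> lvl D = 0 \<Longrightarrow> D = AA"
proof -
  assume g: "grid D" and l: "lvl D = 0"
  have f: "finite D" using g grid_V V_fin by blast
  then have "D - AA = {}" using l unfolding lvl_def by simp
  then have "D \<subseteq> AA" by blast
  moreover have "card D = card AA" using g grid_V V_card AA_V by simp
  ultimately show ?thesis using AA_fin by (simp add: card_subset_eq)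
qed

lemma grid_lvlm: "grid D \<Longrightarrow> lvl D = m \<Longrightarrow> D = CC"
proof -
  assume g: "grid D" and l: "lvl D = m"
  have s1: "D - AA \<subseteq> RR" using g unfolding grid_def RR_def by auto
  have fR: "finite RR" using CC_fin unfolding RR_def by simp
  have e1: "D - AA = RR" using card_subset_eq[OF fR s1] l cardRR unfolding lvl_def by simp
  have s2: "XX \<subseteq> D \<inter> AA" using g unfolding grid_def XX_def by auto
  have "card (D \<inter> AA) = card XX" using grid_split[OF g] l n_eq by simp
  moreover have "finite (D \<inter> AA)" using AA_fin by simp
  ultimately have e2: "D \<inter> AA = XX" using card_subset_eq[OF _ s2] by simp
  have "D = (D \<inter> AA) \<union> (D - AA)" by blast
  also have "\<dots> = XX \<union> RR" using e1 e2 by simp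
  also have "\<dots> = CC" unfolding XX_def RR_def by blast
  finally show ?thesis .
qed

definition is_chain where
  "is_chain g D1 l D2 \<longleftrightarrow> g 0 = D1 \<and> g l = D2 \<and> (\<forall>k\<le>l. grid (g k) \<and> lvl (g k) = lvl D1 + k) \<and>
     (\<forall>k<l. exch_adj (g k) (g (Suc k)))"

lemma grid_eq:
  assumes "grid D1" "grid D2" "D2 \<inter> AA \<subseteq> D1 \<inter> AA" "D1 - AA \<subseteq> D2 - AA" "lvl D1 = lvl D2"
  shows "D1 = D2"
proof -
  have f1: "finite D1" "finite D2" using assms grid_V V_fin by auto
  have a: "D1 - AA = D2 - AA"
    using card_subset_eq[of "D2 - AA" "D1 - AA"] assms(4,5) f1 unfolding lvl_def by simp
  have "card (D1 \<inter> AA) = card (D2 \<inter> AA)" using grid_split[OF assms(1)] grid_split[OF assms(2)] assms(5) by linarith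
  then have b: "D1 \<inter> AA = D2 \<inter> AA"
    using card_subset_eq[of "D1 \<inter> AA" "D2 \<inter> AA"] assms(3) f1 by simp
  have "D1 = (D1 \<inter> AA) \<union> (D1 - AA)" "D2 = (D2 \<inter> AA) \<union> (D2 - AA)" by auto
  then show ?thesis using a b by simp
qed

lemma chain_step:
  assumes g1: "grid D1" and g2: "grid D2" and s1: "D2 \<inter> AA \<subseteq> D1 \<inter> AA" and s2: "D1 - AA \<subseteq> D2 - AA"
    and lt: "lvl D1 < lvl D2"
  shows "\<exists>D1'. grid D1' \<and> D2 \<inter> AA \<subseteq> D1' \<inter> AA \<and> D1' - AA \<subseteq> D2 - AA \<and> lvl D1' = Suc (lvl D1)
     \<and> exch_adj D1 D1'"
proof -
  have f1: "finite D1" "finite D2" using g1 g2 grid_V V_fin by auto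
  have ds1: "downset Q le D1" "downset Q le D2" using g1 g2 grid_V V_ds by auto
  have Q1: "D1 \<subseteq> Q" "D2 \<subseteq> Q" using ds1 ds_sub by auto
  have X1: "XX \<subseteq> D1" "XX \<subseteq> D2" "D1 \<subseteq> AA \<union> CC" "D2 \<subseteq> AA \<union> CC" using g1 g2 unfolding grid_def by auto
  let ?S1 = "(D1 \<inter> AA) - D2"
  let ?S2 = "(D2 - AA) - D1"
  have ne1: "?S1 \<noteq> {}"
  proof
    assume "?S1 = {}"
    then have "D1 \<inter> AA = D2 \<inter> AA" using s1 by blast
    then have "card (D1 \<inter> AA) = card (D2 \<inter> AA)" by simp
    then have "lvl D1 = lvl D2" using grid_split[OF g1] grid_split[OF g2] by linarith
    then show False using lt by simp
  qed
  have ne2: "?S2 \<noteq> {}"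
  proof
    assume "?S2 = {}"
    then have "D1 - AA = D2 - AA" using s2 by blast
    then show False using lt unfolding lvl_def by simp
  qed
  obtain u where u: "u \<in> ?S1" and umax: "\<forall>y\<in>?S1. le u y \<longrightarrow> y = u"
    using ex_maximal[of ?S1] ne1 f1 Q1 by blast
  obtain t where t: "t \<in> ?S2" and tmin: "\<forall>y\<in>?S2. le y t \<longrightarrow> y = t"
    using ex_minimal[of ?S2] ne2 f1 Q1 by blast
  have uQ: "u \<in> Q" "u \<in> D1" "u \<in> AA" "u \<notin> D2" using u Q1 by auto
  have uC: "u \<notin> CC" using uQ X1 unfolding XX_def by blast
  have tQ: "t \<in> Q" "t \<in> D2" "t \<notin> AA" "t \<notin> D1" using t Q1 by auto
  have tC: "t \<in> CC" using tQ X1 by blast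
  have um: "\<forall>y\<in>D1. le u y \<longrightarrow> y = u"
  proof (intro ballI impI)
    fix y assume y: "y \<in> D1" "le u y"
    have yQ: "y \<in> Q" using y Q1 by blast
    have "y \<notin> D2" using ds_down[OF ds1(2), of y u] y uQ by blast
    moreover have "y \<in> AA"
    proof (rule ccontr)
      assume "y \<notin> AA"
      then have "y \<in> CC" using y X1 by blast
      then have "u \<in> CC" using ds_down[OF CC_ds, of y u] y uQ by blast
      then show False using uC by blast
    qed
    ultimately show "y = u" using umax y by blast
  qed
  have tm: "\<forall>y\<in>Q. le y t \<longrightarrow> y = t \<or> y \<in> D1 - {u}"
  proof (intro ballI impI)
    fix y assume y: "y \<in> Q" "le y t"
    have yD2: "y \<in> D2" using ds_down[OF ds1(2) tQ(2) y] .
    show "y = t \<or> y \<in> D1 - {u}"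
    proof (cases "y \<in> AA")
      case True
      have "y \<in> CC" using ds_down[OF CC_ds tC y] .
      then have "y \<in> D1" using True X1 unfolding XX_def by blast
      moreover have "y \<noteq> u" using yD2 uQ by blast
      ultimately show ?thesis by blast
    next
      case False
      show ?thesis
      proof (cases "y \<in> D1")
        case True then show ?thesis using False uQ by blast
      next
        case False2: False
        then have "y \<in> ?S2" using yD2 False by blast
        then show ?thesis using tmin y by blast
      qed
    qed
  qed
  define D1' where "D1' = insert t (D1 - {u})"
  have ds': "downset Q le D1'" unfolding D1'_def
    by (rule ds_insert[OF ds_remove[OF ds1(1) um] tQ(1) tm])
  have "card (D1 - {u}) = card D1 - 1" using f1 uQ by simp
  moreover have "t \<notin> D1 - {u}" using tQ by blast
  moreover have "card D1 = n" using g1 grid_V V_card by blast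
  moreover have "card D1 > 0" using f1 uQ card_gt_0_iff by blast
  ultimately have cd: "card D1' = n" unfolding D1'_def using f1 by simp
  have gr: "grid D1'" unfolding grid_def
  proof (intro conjI)
    show "D1' \<in> V" using ds' cd V_I by blast
    show "XX \<subseteq> D1'" unfolding D1'_def using X1 uC unfolding XX_def by blast
    show "D1' \<subseteq> AA \<union> CC" unfolding D1'_def using X1 tC by blast
  qed
  have e1: "D1' \<inter> AA = (D1 \<inter> AA) - {u}" unfolding D1'_def using tQ by blast
  have e2: "D1' - AA = insert t (D1 - AA)" unfolding D1'_def using uQ tQ by blast
  have lv: "lvl D1' = Suc (lvl D1)" unfolding lvl_def e2 using f1 tQ by simp
  have adj: "exch_adj D1 D1'"
  proof -
    have "D1 - D1' = {u}" unfolding D1'_def using uQ tQ by blast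
    moreover have "D1' - D1 = {t}" unfolding D1'_def using tQ by blast
    ultimately show ?thesis unfolding exch_adj_def by simp
  qed
  have "D2 \<inter> AA \<subseteq> D1' \<inter> AA" unfolding e1 using s1 uQ by blast
  moreover have "D1' - AA \<subseteq> D2 - AA" unfolding e2 using s2 tQ by blast
  ultimately show ?thesis using gr lv adj by blast
qed

lemma chain_exists_aux:
  "\<forall>D1. grid D1 \<and> D2 \<inter> AA \<subseteq> D1 \<inter> AA \<and> D1 - AA \<subseteq> D2 - AA \<and> lvl D1 + d = lvl D2 \<longrightarrow>
     (\<exists>g. is_chain g D1 d D2)" if g2: "grid D2"
proof (induction d)
  case 0
  show ?case
  proof (intro allI impI)
    fix D1 assume a: "grid D1 \<and> D2 \<inter> AA \<subseteq> D1 \<inter> AA \<and> D1 - AA \<subseteq> D2 - AA \<and> lvl D1 + 0 = lvl D2"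
    then have "D1 = D2" using grid_eq g2 by auto
    then have "is_chain (\<lambda>_. D1) D1 0 D2" unfolding is_chain_def using a by simp
    then show "\<exists>g. is_chain g D1 0 D2" by blast
  qed
next
  case (Suc d)
  show ?case
  proof (intro allI impI)
    fix D1 assume a: "grid D1 \<and> D2 \<inter> AA \<subseteq> D1 \<inter> AA \<and> D1 - AA \<subseteq> D2 - AA \<and> lvl D1 + Suc d = lvl D2"
    then obtain D1' where D1': "grid D1'" "D2 \<inter> AA \<subseteq> D1' \<inter> AA" "D1' - AA \<subseteq> D2 - AA"
      "lvl D1' = Suc (lvl D1)" "exch_adj D1 D1'"
      using chain_step[of D1 D2] g2 by auto
    then have "lvl D1' + d = lvl D2" using a by simp
    then obtain g' where g': "is_chain g' D1' d D2" using Suc.IH D1' by blast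
    define g where "g = (\<lambda>k. if k = 0 then D1 else g' (k - 1))"
    have "is_chain g D1 (Suc d) D2"
      unfolding is_chain_def
    proof (intro conjI allI impI)
      show "g 0 = D1" unfolding g_def by simp
      show "g (Suc d) = D2" unfolding g_def using g' unfolding is_chain_def by simp
      fix k
      show "k \<le> Suc d \<Longrightarrow> grid (g k)"
        unfolding g_def using g' a unfolding is_chain_def by (cases k) auto
      show "k \<le> Suc d \<Longrightarrow> lvl (g k) = lvl D1 + k"
        unfolding g_def using g' D1'(4) unfolding is_chain_def by (cases k) auto
      show "k < Suc d \<Longrightarrow> exch_adj (g k) (g (Suc k))"
      proof -
        assume k: "k < Suc d"
        show "exch_adj (g k) (g (Suc k))"
        proof (cases k)
          case 0 then show ?thesis unfolding g_def using g' D1'(5) unfolding is_chain_def by simp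
        next
          case (Suc k') then show ?thesis unfolding g_def using g' k unfolding is_chain_def by simp
        qed
      qed
    qed
    then show "\<exists>g. is_chain g D1 (Suc d) D2" by blast
  qed
qed

lemma chain_exists:
  assumes "grid D1" "grid D2" "D2 \<inter> AA \<subseteq> D1 \<inter> AA" "D1 - AA \<subseteq> D2 - AA"
  shows "lvl D1 \<le> lvl D2 \<and> (\<exists>g. is_chain g D1 (lvl D2 - lvl D1) D2)"
proof -
  have f: "finite D2" using assms grid_V V_fin by blast
  have le: "lvl D1 \<le> lvl D2" unfolding lvl_def using assms(4) f by (simp add: card_mono)
  then have "lvl D1 + (lvl D2 - lvl D1) = lvl D2" by simp
  then show ?thesis using chain_exists_aux[OF assms(2), of "lvl D2 - lvl D1"] assms le by blast
qed

lemma chain_cat: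
  assumes c1: "is_chain g1 D1 l1 D2" and c2: "is_chain g2 D2 l2 D3"
  shows "is_chain (\<lambda>k. if k \<le> l1 then g1 k else g2 (k - l1)) D1 (l1 + l2) D3"
proof -
  have a1: "g1 0 = D1" "g1 l1 = D2" "\<forall>k\<le>l1. grid (g1 k) \<and> lvl (g1 k) = lvl D1 + k"
    "\<forall>k<l1. exch_adj (g1 k) (g1 (Suc k))" using c1 unfolding is_chain_def by auto
  have a2: "g2 0 = D2" "g2 l2 = D3" "\<forall>k\<le>l2. grid (g2 k) \<and> lvl (g2 k) = lvl D2 + k"
    "\<forall>k<l2. exch_adj (g2 k) (g2 (Suc k))" using c2 unfolding is_chain_def by auto
  have lD2: "lvl D2 = lvl D1 + l1" using a1 by auto
  show ?thesis unfolding is_chain_def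
  proof (intro conjI allI impI)
    show "(if 0 \<le> l1 then g1 0 else g2 (0 - l1)) = D1" using a1 by simp
    show "(if l1 + l2 \<le> l1 then g1 (l1 + l2) else g2 (l1 + l2 - l1)) = D3"
      using a1 a2 by (cases "l2 = 0") auto
    fix k
    assume k: "k \<le> l1 + l2"
    show "grid (if k \<le> l1 then g1 k else g2 (k - l1))"
      using a1 a2 k by auto
    show "lvl (if k \<le> l1 then g1 k else g2 (k - l1)) = lvl D1 + k"
      using a1 a2 k lD2 by auto
  next
    fix k
    assume k: "k < l1 + l2"
    show "exch_adj (if k \<le> l1 then g1 k else g2 (k - l1)) (if Suc k \<le> l1 then g1 (Suc k) else g2 (Suc k - l1))"
    proof (cases "k < l1")
      case True then show ?thesis using a1 by simp
    next
      case False
      then have "Suc k - l1 = Suc (k - l1)" "k - l1 < l2" using k by auto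
      moreover have "k \<le> l1 \<Longrightarrow> g1 k = g2 (k - l1)" using False a1 a2 by simp
      ultimately show ?thesis using a2 False by (cases "k \<le> l1") auto
    qed
  qed
qed

lemma chain_props:
  assumes "is_chain g D1 l D2"
  shows "\<forall>k\<le>l. g k \<in> V" "inj_on g {..l}" "\<forall>k<l. exch_adj (g k) (g (Suc k))"
proof -
  show "\<forall>k\<le>l. g k \<in> V" using assms grid_V unfolding is_chain_def by blast
  show "inj_on g {..l}"
  proof (rule inj_onI)
    fix x y assume "x \<in> {..l}" "y \<in> {..l}" "g x = g y"
    then have "lvl D1 + x = lvl D1 + y" using assms unfolding is_chain_def by (metis atMost_iff)
    then show "x = y" by simp
  qed
  show "\<forall>k<l. exch_adj (g k) (g (Suc k))" using assms unfolding is_chain_def by blast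
qed

lemma m_le_r: "m \<le> r"
proof -
  have "card (vs ! 0 - vs ! r) \<le> r - 0" using dist[of 0 r] sp_len unfolding r_def by simp
  then show ?thesis unfolding m_def PP_def using hd_nth last_nth by simp
qed

lemma MP2:
  assumes gD: "grid D" and gD': "grid D'" and s1: "D' \<inter> AA \<subseteq> D \<inter> AA" and s2: "D - AA \<subseteq> D' - AA"
    and l0: "0 < lvl D" and lm: "lvl D' < m" and b: "cls D = b \<or> cls D' = b" and ba: "b \<noteq> \<alpha>" and bg: "b \<noteq> \<gamma>"
  shows "cls D = cls D'"
proof -
  obtain g1 where g1: "is_chain g1 AA (lvl D) D"
    using chain_exists[OF grid_AA gD] lvl_AA by auto
  obtain g2 where g2: "is_chain g2 D (lvl D' - lvl D) D'" and le12: "lvl D \<le> lvl D'"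
    using chain_exists[OF gD gD' s1 s2] by auto
  have s3: "CC \<inter> AA \<subseteq> D' \<inter> AA" using gD' unfolding grid_def XX_def by auto
  have s4: "D' - AA \<subseteq> CC - AA" using gD' unfolding grid_def by auto
  obtain g3 where g3: "is_chain g3 D' (m - lvl D') CC"
    using chain_exists[OF gD' grid_CC s3 s4] lvl_CC by auto
  define g12 where "g12 = (\<lambda>k. if k \<le> lvl D then g1 k else g2 (k - lvl D))"
  have c12: "is_chain g12 AA (lvl D + (lvl D' - lvl D)) D'" unfolding g12_def by (rule chain_cat[OF g1 g2])
  define g where "g = (\<lambda>k. if k \<le> lvl D + (lvl D' - lvl D) then g12 k else g3 (k - (lvl D + (lvl D' - lvl D))))"
  have c: "is_chain g AA (lvl D + (lvl D' - lvl D) + (m - lvl D')) CC" unfolding g_def by (rule chain_cat[OF c12 g3])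
  have lm': "lvl D + (lvl D' - lvl D) + (m - lvl D') = m" using le12 lm by simp
  have c': "is_chain g AA m CC" using c lm' by simp
  have vD: "g (lvl D) = D" unfolding g_def g12_def using g1 unfolding is_chain_def by simp
  have vD': "g (lvl D') = D'"
  proof -
    have "lvl D' = lvl D + (lvl D' - lvl D)" using le12 by simp
    then have "g (lvl D') = g12 (lvl D + (lvl D' - lvl D))" unfolding g_def by simp
    also have "\<dots> = D'" using c12 unfolding is_chain_def by simp
    finally show ?thesis .
  qed
  have g0: "g 0 = AA" "g m = CC" using c' unfolding is_chain_def by auto
  have cl: "\<alpha> \<noteq> \<gamma>" using classes by simp
  note P = chain_props[OF c']
  have mr: "m \<le> r" by (rule m_le_r)
  show ?thesis
  proof (cases "cls D = b")
    case True
    have "m = r \<and> (\<forall>k. 0 < k \<and> k < m \<longrightarrow> cls (g k) = cls (g (lvl D)))"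
      using no_short[OF P(1) P(2) P(3), of "lvl D"] g0 vD True ba bg cl mr lm le12
      unfolding \<alpha>_def \<gamma>_def by simp
    moreover have "0 < lvl D'" "lvl D' < m" using le12 l0 lm by auto
    ultimately have "cls (g (lvl D')) = cls (g (lvl D))" by blast
    then show ?thesis using vD vD' by simp
  next
    case False
    then have T: "cls D' = b" using b by simp
    have "m = r \<and> (\<forall>k. 0 < k \<and> k < m \<longrightarrow> cls (g k) = cls (g (lvl D')))"
      using no_short[OF P(1) P(2) P(3), of "lvl D'"] g0 vD' T ba bg cl mr lm
      unfolding \<alpha>_def \<gamma>_def by simp
    moreover have "0 < lvl D" "lvl D < m" using le12 l0 lm by auto
    ultimately have "cls (g (lvl D)) = cls (g (lvl D'))" by blast
    then show ?thesis using vD vD' by simp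
  qed
qed



lemma ds_extend:
  assumes dD: "downset Q le D" and dE: "downset Q le E" and DE: "D \<subseteq> E"
  shows "card D \<le> k \<Longrightarrow> k \<le> card E \<Longrightarrow> \<exists>F. downset Q le F \<and> D \<subseteq> F \<and> F \<subseteq> E \<and> card F = k"
proof (induction k)
  case 0
  have "finite D" using dD ds_sub finQ finite_subset by blast
  then have "D = {}" using 0 by simp
  then show ?case using dD by (intro exI[of _ D]) simp
next
  case (Suc k)
  show ?case
  proof (cases "card D = Suc k")
    case True then show ?thesis using dD DE by blast
  next
    case False
    then have "card D \<le> k" "k \<le> card E" using Suc.prems by auto
    then obtain F0 where F0: "downset Q le F0" "D \<subseteq> F0" "F0 \<subseteq> E" "card F0 = k" using Suc.IH by blast
    have fE: "finite E" using dE ds_sub finQ finite_subset by blast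
    have ne: "E - F0 \<noteq> {}"
    proof
      assume "E - F0 = {}"
      then have "E = F0" using F0 by blast
      then show False using F0 Suc.prems by simp
    qed
    have EQ: "E - F0 \<subseteq> Q" using dE ds_sub by blast
    obtain t where t: "t \<in> E - F0" and tm: "\<forall>y\<in>E - F0. le y t \<longrightarrow> y = t"
      using ex_minimal[of "E - F0"] ne fE EQ by blast
    have tQ: "t \<in> Q" using t EQ by blast
    have cl: "\<forall>y\<in>Q. le y t \<longrightarrow> y = t \<or> y \<in> F0"
    proof (intro ballI impI)
      fix y assume y: "y \<in> Q" "le y t"
      then have "y \<in> E" using ds_down[OF dE, of t y] t by blast
      then show "y = t \<or> y \<in> F0" using tm y by blast
    qed
    have d: "downset Q le (insert t F0)" by (rule ds_insert[OF F0(1) tQ cl])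
    have "finite F0" using F0(3) fE finite_subset by blast
    then have "card (insert t F0) = Suc k" using t F0(4) by simp
    then show ?thesis using d F0 t by blast
  qed
qed

lemma v1_decomp:
  obtains x0 y0 where "x0 \<in> AA" "y0 \<notin> AA" "y0 \<in> Q" "vs ! 1 = insert y0 (AA - {x0})"
    "\<forall>y\<in>AA. le x0 y \<longrightarrow> y = x0" "\<forall>y\<in>Q. le y y0 \<longrightarrow> y = y0 \<or> y \<in> AA - {x0}"
proof -
  have adj: "exch_adj AA (vs ! 1)" using sp_adj[of 0] sp_len hd_nth by simp
  have v1V: "vs ! 1 \<in> V" using sp_nth sp_len by simp
  obtain x0 where x0: "AA - vs ! 1 = {x0}" using adj unfolding exch_adj_def by (meson card_1_singletonE)
  obtain y0 where y0: "vs ! 1 - AA = {y0}" using adj unfolding exch_adj_def by (meson card_1_singletonE)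
  have e: "vs ! 1 = insert y0 (AA - {x0})" using x0 y0 by blast
  have x0A: "x0 \<in> AA" "x0 \<notin> vs ! 1" using x0 by auto
  have y0A: "y0 \<notin> AA" "y0 \<in> vs ! 1" using y0 by auto
  have y0Q: "y0 \<in> Q" using y0A V_sub v1V by blast
  have mx: "\<forall>y\<in>AA. le x0 y \<longrightarrow> y = x0"
  proof (intro ballI impI, rule ccontr)
    fix y assume y: "y \<in> AA" "le x0 y" "y \<noteq> x0"
    then have "y \<in> vs ! 1" using e by blast
    then have "x0 \<in> vs ! 1" using ds_down[OF V_ds[OF v1V], of y x0] y x0A AA_Q by blast
    then show False using x0A by blast
  qed
  have bl: "\<forall>y\<in>Q. le y y0 \<longrightarrow> y = y0 \<or> y \<in> AA - {x0}"
  proof (intro ballI impI)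
    fix y assume y: "y \<in> Q" "le y y0"
    then have "y \<in> vs ! 1" using ds_down[OF V_ds[OF v1V], of y0 y] y0A by blast
    then show "y = y0 \<or> y \<in> AA - {x0}" using e by blast
  qed
  show ?thesis using that x0A y0A y0Q e mx bl by blast
qed

lemma chain_to_CC:
  assumes "grid W"
  shows "\<exists>g. is_chain g W (m - lvl W) CC"
proof -
  have s3: "CC \<inter> AA \<subseteq> W \<inter> AA" using assms unfolding grid_def XX_def by auto
  have s4: "W - AA \<subseteq> CC - AA" using assms unfolding grid_def by auto
  show ?thesis using chain_exists[OF assms grid_CC s3 s4] lvl_CC by auto
qed

lemma prepend:
  assumes c: "is_chain g0 D1 l D2" and x: "x \<in> V" "\<not> grid x" "exch_adj x D1"
  defines "g \<equiv> (\<lambda>k. if k = 0 then x else g0 (k - 1))"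
  shows "\<forall>k\<le>Suc l. g k \<in> V" "inj_on g {..Suc l}" "\<forall>k<Suc l. exch_adj (g k) (g (Suc k))"
    "g 0 = x" "g (Suc l) = D2" "\<And>k. k \<le> l \<Longrightarrow> g (Suc k) = g0 k"
proof -
  have c1: "g0 0 = D1" "g0 l = D2" "\<forall>k\<le>l. grid (g0 k) \<and> lvl (g0 k) = lvl D1 + k"
    "\<forall>k<l. exch_adj (g0 k) (g0 (Suc k))" using c unfolding is_chain_def by auto
  show "\<forall>k\<le>Suc l. g k \<in> V"
  proof (intro allI impI)
    fix k assume "k \<le> Suc l"
    then show "g k \<in> V" unfolding g_def using x c1 grid_V by (cases k) auto
  qed
  show "inj_on g {..Suc l}"
  proof (rule inj_onI)
    fix a b assume a: "a \<in> {..Suc l}" "b \<in> {..Suc l}" "g a = g b"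
    show "a = b"
    proof (cases "a = 0")
      case True
      show ?thesis
      proof (rule ccontr)
        assume "a \<noteq> b"
        then have "b \<noteq> 0" "b - 1 \<le> l" using True a by auto
        then have "grid (g b)" unfolding g_def using c1 by simp
        moreover have "g a = x" unfolding g_def using True by simp
        ultimately show False using a x by simp
      qed
    next
      case False
      show ?thesis
      proof (cases "b = 0")
        case True
        have "a - 1 \<le> l" using a by auto
        then have "grid (g a)" unfolding g_def using c1 False by simp
        moreover have "g b = x" unfolding g_def using True by simp
        ultimately show ?thesis using a x by simp
      next
        case False2: False
        have "a - 1 \<le> l" "b - 1 \<le> l" using a by auto
        then have "lvl (g a) = lvl D1 + (a - 1)" "lvl (g b) = lvl D1 + (b - 1)"
          unfolding g_def using c1 False False2 by auto
        then show ?thesis using a False False2 by simp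
      qed
    qed
  qed
  show "\<forall>k<Suc l. exch_adj (g k) (g (Suc k))"
  proof (intro allI impI)
    fix k assume k: "k < Suc l"
    show "exch_adj (g k) (g (Suc k))"
    proof (cases k)
      case 0 then show ?thesis unfolding g_def using x c1 by simp
    next
      case (Suc k') then show ?thesis unfolding g_def using c1 k by simp
    qed
  qed
  show "g 0 = x" unfolding g_def by simp
  show "g (Suc l) = D2" unfolding g_def using c1 by simp
  show "\<And>k. k \<le> l \<Longrightarrow> g (Suc k) = g0 k" unfolding g_def by simp
qed

lemma LW:
  assumes gW: "grid W" and lW: "lvl W = 1" and aW: "exch_adj AA W" and vW: "exch_adj (vs ! 1) W"
    and ng: "\<not> grid (vs ! 1)" and mr: "m < r" and r3: "3 \<le> r"
  shows False
proof -
  have cl: "\<alpha> \<noteq> \<beta>" "\<beta> \<noteq> \<gamma>" "\<alpha> \<noteq> \<gamma>" using classes by auto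
  have v1V: "vs ! 1 \<in> V" using sp_nth sp_len by simp
  have WV: "W \<in> V" using gW grid_V by blast
  have a01: "exch_adj AA (vs ! 1)" using sp_adj[of 0] sp_len hd_nth by simp
  have m1: "1 \<le> m" using grid_lvl_le[OF gW] lW by simp
  obtain gW' where cW: "is_chain gW' W (m - 1) CC" using chain_to_CC[OF gW] lW by auto
  have cWW: "gW' 0 = W" "gW' (m - 1) = CC" using cW unfolding is_chain_def by auto
  show False
  proof (cases "cls W = \<alpha> \<or> cls W = \<beta>")
    case False
    show False
      by (rule F2[of W AA "vs ! 1"]) (use WV AA_V v1V exch_adj_sym[OF aW] a01 False cl r3 in
        \<open>auto simp: \<alpha>_def \<beta>_def\<close>)
  next
    case True
    then show False
    proof
      assume cWa: "cls W = \<alpha>"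
      note P = prepend[OF cW v1V ng vW]
      let ?g = "\<lambda>k. if k = 0 then vs ! 1 else gW' (k - 1)"
      have e1: "Suc (m - 1) = m" using m1 by simp
      have g1: "?g 1 = W" using cWW by simp
      have gm: "?g m = CC" using P(5) e1 by simp
      have "m = r \<and> (\<forall>k. 0 < k \<and> k < m \<longrightarrow> cls (?g k) = cls (?g 1))"
        using no_short[of m ?g 1] P(1-3) e1 g1 gm cWa cl mr m1
        unfolding \<alpha>_def \<beta>_def \<gamma>_def by (simp only: ) (auto simp: \<alpha>_def \<beta>_def \<gamma>_def)
      then show False using mr by simp
    next
      assume cWb: "cls W = \<beta>"
      define g1 where "g1 = (\<lambda>k::nat. if k = 0 then AA else W)"
      have c1: "is_chain g1 AA 1 W" unfolding is_chain_def g1_def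
        using grid_AA gW lvl_AA lW aW by (auto simp: le_Suc_eq)
      have c: "is_chain (\<lambda>k. if k \<le> 1 then g1 k else gW' (k - 1)) AA (1 + (m - 1)) CC"
        by (rule chain_cat[OF c1 cW])
      then have c': "is_chain (\<lambda>k. if k \<le> 1 then g1 k else gW' (k - 1)) AA m CC" using m1 by simp
      let ?g = "\<lambda>k. if k \<le> 1 then g1 k else gW' (k - 1)"
      note P = chain_props[OF c']
      have g0: "?g 0 = AA" "?g 1 = W" "?g m = CC" using c' unfolding is_chain_def g1_def by auto
      have "m = r \<and> (\<forall>k. 0 < k \<and> k < m \<longrightarrow> cls (?g k) = cls (?g 1))"
        using no_short[OF P(1) P(2) P(3), of 1] g0 cWb cl mr m1
        unfolding \<alpha>_def \<beta>_def \<gamma>_def by auto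
      then show False using mr by simp
    qed
  qed
qed

lemma B3:
  assumes ng: "\<not> grid (vs ! 1)" and a: "exch_adj (vs ! 1) AA" and mr: "m + 1 \<le> r" and r3: "3 \<le> r" and m1: "1 \<le> m"
  shows False
proof -
  have cl: "\<alpha> \<noteq> \<beta>" "\<beta> \<noteq> \<gamma>" "\<alpha> \<noteq> \<gamma>" using classes by auto
  have v1V: "vs ! 1 \<in> V" using sp_nth sp_len by simp
  obtain gA where cA: "is_chain gA AA m CC" using chain_to_CC[OF grid_AA] lvl_AA by auto
  have cAA: "gA 0 = AA" "gA m = CC" "\<forall>k\<le>m. grid (gA k) \<and> lvl (gA k) = lvl AA + k"
    "\<forall>k<m. exch_adj (gA k) (gA (Suc k))" using cA unfolding is_chain_def by auto
  note P = prepend[OF cA v1V ng a]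
  let ?g = "\<lambda>k. if k = 0 then vs ! 1 else gA (k - 1)"
  have g1: "?g 1 = AA" using cAA by simp
  have gm: "?g (Suc m) = CC" using P(5) by simp
  have "Suc m = r \<and> (\<forall>k. 0 < k \<and> k < Suc m \<longrightarrow> cls (?g k) = cls (?g 1))"
    using no_short[of "Suc m" ?g 1] P(1-3) g1 gm cl mr
    unfolding \<alpha>_def \<beta>_def \<gamma>_def by auto
  then have allk: "\<forall>k. 0 < k \<and> k < Suc m \<longrightarrow> cls (?g k) = cls (?g 1)" by (rule conjunct2)
  have m0: "0 < m" "m < Suc m" using m1 by auto
  have "cls (?g m) = cls (?g 1)" using allk[rule_format, OF conjI[OF m0]] .
  moreover have "?g m = gA (m - 1)" using m1 by simp
  ultimately have cm: "cls (gA (m - 1)) = \<alpha>" using g1 unfolding \<alpha>_def by simp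
  have gV: "gA (m - 1) \<in> V" using cAA grid_V by simp
  have adj1: "exch_adj (gA (m - 1)) CC" using cAA(4)[rule_format, of "m - 1"] cAA(2) m1 by simp
  have rr: "r - 1 < r" "0 < r - 1" using r3 by auto
  have e: "Suc (r - 1) = r" using r3 by simp
  have rl: "Suc (r - 1) < length vs" using e sp_len unfolding r_def by simp
  have "exch_adj (vs ! (r - 1)) (vs ! Suc (r - 1))" using sp_adj[OF rl] .
  then have "exch_adj (vs ! (r - 1)) CC" using e last_nth by simp
  then have adj2: "exch_adj CC (vs ! (r - 1))" by (rule exch_adj_sym)
  have cv: "cls (vs ! (r - 1)) = \<beta>" using classes rr by blast
  have vV: "vs ! (r - 1) \<in> V" using sp_nth r3 unfolding r_def by simp
  show False
    by (rule F2[OF gV CC_V vV adj1 adj2]) (use cm cv cl r3 in \<open>auto simp: \<gamma>_def\<close>)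
qed



lemma caseA:
  assumes aP: "a \<in> PP" and a'P: "a' \<in> PP" and zP: "z \<in> PP" and wP: "w \<in> PP"
    and aa': "a \<noteq> a'" and za: "z \<noteq> a" and za': "z \<noteq> a'" and leaa': "le a a'"
    and cov: "\<forall>y\<in>Q. le a y \<and> le y a' \<longrightarrow> y = a \<or> y = a'"
    and naz: "\<not> le a z" and nwa': "\<not> le w a'" and nwz: "\<not> le w z"
    and x0P: "x0 \<in> PP" and y0R: "y0 \<in> RR" and v1: "vs ! 1 = insert y0 (AA - {x0})"
    and x0m: "\<forall>y\<in>AA. le x0 y \<longrightarrow> y = x0" and y0b: "\<forall>y\<in>Q. le y y0 \<longrightarrow> y = y0 \<or> y \<in> AA - {x0}"
  shows False
proof -
  have cl: "\<alpha> \<noteq> \<beta>" "\<beta> \<noteq> \<gamma>" "\<alpha> \<noteq> \<gamma>" using classes by auto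
  have PQ: "PP \<subseteq> Q" "RR \<subseteq> Q" using AA_Q CC_Q unfolding PP_def RR_def by auto
  have PA: "PP \<subseteq> AA" "PP \<inter> CC = {}" "RR \<subseteq> CC" "RR \<inter> AA = {}" unfolding PP_def RR_def by auto
  have fP: "finite PP" "finite RR" using AA_fin CC_fin unfolding PP_def RR_def by auto
  have XAC: "XX \<subseteq> AA" "XX \<subseteq> CC" unfolding XX_def by auto
  have mr: "m \<le> r" by (rule m_le_r)
  define L where "L = {y\<in>PP. le y a' \<or> le y z}"
  have aQ: "a \<in> Q" "a' \<in> Q" "z \<in> Q" "w \<in> Q" using aP a'P zP wP PQ by auto
  have aL: "a \<in> L" "a' \<in> L" "z \<in> L" unfolding L_def using aP a'P zP leaa' prefl aQ by auto
  have wL: "w \<notin> L" unfolding L_def using nwa' nwz by auto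
  have LP: "L \<subseteq> PP" unfolding L_def by auto
  have fL: "finite L" using LP fP finite_subset by blast
  have cL3: "3 \<le> card L"
  proof -
    have "{a, a', z} \<subseteq> L" using aL by auto
    then have "card {a, a', z} \<le> card L" using fL by (rule card_mono[rotated])
    moreover have "card {a, a', z} = 3" using aa' za za' by auto
    ultimately show ?thesis by simp
  qed
  have cLm: "card L + 1 \<le> m"
  proof -
    have "L \<subseteq> PP - {w}" using LP wL by auto
    then have "card L \<le> card (PP - {w})" using fP by (intro card_mono) auto
    moreover have "card (PP - {w}) = m - 1" using wP fP unfolding m_def by simp
    moreover have "0 < card PP" using wP fP(1) card_gt_0_iff by blast
    then have "m \<ge> 1" unfolding m_def by simp
    ultimately show ?thesis by simp
  qed
  have Llow: "\<forall>l\<in>L. \<forall>y\<in>Q. le y l \<longrightarrow> y \<in> XX \<union> L"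
  proof (intro ballI impI)
    fix l y assume l: "l \<in> L" and y: "y \<in> Q" "le y l"
    have lQ: "l \<in> Q" "l \<in> AA" using l LP PQ PA by auto
    have yA: "y \<in> AA" using ds_down[OF AA_ds lQ(2) y] .
    show "y \<in> XX \<union> L"
    proof (cases "y \<in> CC")
      case True then show ?thesis using yA unfolding XX_def by blast
    next
      case False
      then have yP: "y \<in> PP" using yA unfolding PP_def by blast
      have "le l a' \<or> le l z" using l unfolding L_def by blast
      then have "le y a' \<or> le y z" using ptrans[of y l a'] ptrans[of y l z] y lQ aQ by blast
      then show ?thesis using yP unfolding L_def by blast
    qed
  qed
  have XLds: "downset Q le (XX \<union> L)"
    unfolding downset_def
  proof (intro conjI ballI impI)
    show "XX \<union> L \<subseteq> Q" using XX_ds ds_sub LP PQ by blast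
    fix x y assume x: "x \<in> XX \<union> L" and y: "y \<in> Q" "le y x"
    show "y \<in> XX \<union> L"
    proof (cases "x \<in> XX")
      case True then show ?thesis using ds_down[OF XX_ds True y] by blast
    next
      case False then show ?thesis using x y Llow by blast
    qed
  qed
  have nXm: "n = card XX + m" by (rule n_eq)
  have cXC: "card XX \<le> card XX + (m - card L)" by simp
  have cCn: "card CC = n" using CC_V V_card by blast
  obtain F where F: "downset Q le F" "XX \<subseteq> F" "F \<subseteq> CC" "card F = card XX + (m - card L)"
    using ds_extend[OF XX_ds CC_ds XAC(2) cXC] cCn nXm by auto
  have fF: "finite F" using F(3) CC_fin finite_subset by blast
  have FA: "F \<inter> AA = XX" using F(2,3) unfolding XX_def by blast
  have cFA: "card (F - AA) = m - card L"
    using card_Int_Diff[OF fF, of AA] FA F(4) by simp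
  define D1 where "D1 = F \<union> L"
  have D1eq: "D1 = F \<union> (XX \<union> L)" unfolding D1_def using F(2) by blast
  have D1ds: "downset Q le D1" unfolding D1eq by (rule ds_Un[OF F(1) XLds])
  have FL: "F \<inter> L = {}" using F(3) LP PA by blast
  have cD1: "card D1 = n" unfolding D1_def using card_Un_disjoint[OF fF fL FL] F(4) nXm cLm by simp
  have gD1: "grid D1" unfolding grid_def
    using V_I[OF D1ds cD1] F(2,3) LP PA unfolding D1_def by blast
  have D1A: "D1 \<inter> AA = XX \<union> L" unfolding D1_def using FA LP PA by blast
  have D1mA: "D1 - AA = F - AA" unfolding D1_def using LP PA by blast
  have lD1: "lvl D1 = m - card L" unfolding lvl_def D1mA using cFA .
  have lD1a: "1 \<le> lvl D1" "lvl D1 + 3 \<le> m" using lD1 cLm cL3 by auto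
  define RF where "RF = RR - F"
  have RFQ: "RF \<subseteq> Q" "finite RF" using PQ fP unfolding RF_def by auto
  have RFF: "RR \<inter> F = F - AA" using F(3) unfolding RR_def by blast
  have cRF: "card RF = card L"
  proof -
    have "card RR = card (RR \<inter> F) + card (RR - F)" using card_Int_Diff[OF fP(2)] .
    then show ?thesis unfolding RF_def using RFF cFA cardRR cLm by simp
  qed
  define M0 where "M0 = {t\<in>RF. \<forall>y\<in>RF. le y t \<longrightarrow> y = t}"
  have RFne: "RF \<noteq> {}" using cRF cL3 by auto
  obtain t0 where "t0 \<in> RF" "\<forall>y\<in>RF. le y t0 \<longrightarrow> y = t0" using ex_minimal[OF RFQ(2) RFne RFQ(1)] by blast
  then have t0: "t0 \<in> M0" unfolding M0_def by blast
  obtain t1 where t1: "t1 \<in> M0" and t1h: "\<forall>t. t \<in> M0 \<longrightarrow> h t1 \<le> h t"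
    using ex_has_least_nat[of "\<lambda>t. t \<in> M0" t0 h] t0 by blast
  have t1R: "t1 \<in> RF" "\<forall>y\<in>RF. le y t1 \<longrightarrow> y = t1" using t1 unfolding M0_def by auto
  have RF2ne: "RF - {t1} \<noteq> {}"
  proof
    assume "RF - {t1} = {}"
    then have "RF \<subseteq> {t1}" by blast
    then have "card RF \<le> 1" using card_mono[of "{t1}" RF] by simp
    then show False using cRF cL3 by simp
  qed
  obtain t2 where t2: "t2 \<in> RF - {t1}" and t2m: "\<forall>y\<in>RF - {t1}. le y t2 \<longrightarrow> y = t2"
    using ex_minimal[of "RF - {t1}"] RF2ne RFQ by blast
  have tQ: "t1 \<in> Q" "t2 \<in> Q" "t1 \<in> CC" "t2 \<in> CC" "t1 \<notin> AA" "t2 \<notin> AA" "t1 \<notin> F" "t2 \<notin> F" "t1 \<noteq> t2"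
    using t1R t2 RFQ unfolding RF_def RR_def by auto
  have ht: "h t1 \<le> h t2"
  proof (cases "le t1 t2")
    case True then show ?thesis using h_mono tQ by blast
  next
    case False
    have "\<forall>y\<in>RF. le y t2 \<longrightarrow> y = t2"
    proof (intro ballI impI)
      fix y assume "y \<in> RF" "le y t2"
      then show "y = t2" using t2m False by (cases "y = t1") auto
    qed
    then have "t2 \<in> M0" using t2 unfolding M0_def by blast
    then show ?thesis using t1h by blast
  qed
  have a'A: "a' \<in> AA" "a' \<notin> CC" "a \<in> AA" "a \<notin> CC" using aP a'P unfolding PP_def by auto
  have a'max: "\<forall>y\<in>D1. le a' y \<longrightarrow> y = a'"
  proof (intro ballI impI)
    fix y assume y: "y \<in> D1" "le a' y"
    show "y = a'"
    proof (cases "y \<in> F")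
      case True
      then have "y \<in> CC" using F(3) by blast
      then have "a' \<in> CC" using ds_down[OF CC_ds _ aQ(2) y(2)] by blast
      then show ?thesis using a'A by blast
    next
      case False
      then have yL: "y \<in> L" using y unfolding D1_def by blast
      then have yQ: "y \<in> Q" using LP PQ by blast
      have "le y a' \<or> le y z" using yL unfolding L_def by blast
      then show ?thesis
      proof
        assume "le y a'" then show ?thesis using pantisym[OF yQ aQ(2)] y by blast
      next
        assume "le y z"
        then have "le a' z" using ptrans[OF aQ(2) yQ aQ(3)] y by blast
        then have "le a z" using ptrans[OF aQ(1) aQ(2) aQ(3)] leaa' by blast
        then show ?thesis using naz by blast
      qed
    qed
  qed
  have t1cl: "\<forall>y\<in>Q. le y t1 \<longrightarrow> y = t1 \<or> y \<in> D1 - {a'}"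
  proof (intro ballI impI)
    fix y assume y: "y \<in> Q" "le y t1"
    have yC: "y \<in> CC" using ds_down[OF CC_ds tQ(3) y] .
    show "y = t1 \<or> y \<in> D1 - {a'}"
    proof (cases "y \<in> AA")
      case True
      then have "y \<in> XX" using yC unfolding XX_def by blast
      then show ?thesis using F(2) a'A XAC unfolding D1_def by blast
    next
      case False
      show ?thesis
      proof (cases "y \<in> F")
        case True then show ?thesis using a'A yC unfolding D1_def by blast
      next
        case False2: False
        then have "y \<in> RF" using yC False unfolding RF_def RR_def by blast
        then show ?thesis using t1R y by blast
      qed
    qed
  qed
  define D2 where "D2 = insert t1 (D1 - {a'})"
  have t1D1: "t1 \<notin> D1" using tQ LP PA unfolding D1_def by blast
  have fD1: "finite D1" using gD1 grid_V V_fin by blast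
  have D2ds: "downset Q le D2" unfolding D2_def by (rule ds_insert[OF ds_remove[OF D1ds a'max] tQ(1) t1cl])
  have a'D1: "a' \<in> D1" using aL unfolding D1_def by blast
  have "0 < card D1" using fD1 a'D1 card_gt_0_iff by blast
  then have n0: "1 \<le> n" using cD1 by simp
  have cD2: "card D2 = n"
  proof -
    have "card (D1 - {a'}) = n - 1" using card_Diff_singleton[OF a'D1] cD1 by simp
    moreover have "t1 \<notin> D1 - {a'}" using t1D1 by blast
    moreover have "finite (D1 - {a'})" using fD1 by simp
    ultimately show ?thesis unfolding D2_def using n0 by simp
  qed
  have gD2: "grid D2" unfolding grid_def
    using V_I[OF D2ds cD2] gD1 tQ a'A unfolding grid_def D2_def XX_def by blast
  have s12: "D2 \<inter> AA \<subseteq> D1 \<inter> AA" "D1 - AA \<subseteq> D2 - AA" unfolding D2_def using a'A tQ by auto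
  have D2mA: "D2 - AA = insert t1 (D1 - AA)" unfolding D2_def using a'A tQ by blast
  have lD2: "lvl D2 = lvl D1 + 1" unfolding lvl_def D2mA using fD1 t1D1 by simp
  have cp1: "cpairs D1 le = cpairs (D1 - {a'}) le + h a'" using cp_remove[OF D1ds a'D1 a'max] .
  have t1max: "\<forall>y\<in>D2. le t1 y \<longrightarrow> y = t1"
  proof (intro ballI impI)
    fix y assume y: "y \<in> D2" "le t1 y"
    show "y = t1"
    proof (rule ccontr)
      assume ne: "y \<noteq> t1"
      then have yD: "y \<in> D1" using y unfolding D2_def by blast
      show False
      proof (cases "y \<in> F")
        case True then show False using ds_down[OF F(1) True tQ(1) y(2)] tQ by blast
      next
        case False
        then have "y \<in> AA" using yD LP PA unfolding D1_def by blast
        then show False using ds_down[OF AA_ds _ tQ(1) y(2)] tQ by blast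
      qed
    qed
  qed
  have t1D2: "t1 \<in> D2" unfolding D2_def by blast
  have D2t1: "D2 - {t1} = D1 - {a'}" unfolding D2_def using t1D1 by blast
  have cp2: "cpairs D2 le = cpairs (D1 - {a'}) le + h t1"
    using cp_remove[OF D2ds t1D2 t1max] D2t1 by simp
  have amax: "\<forall>y\<in>D2. le a y \<longrightarrow> y = a"
  proof (intro ballI impI)
    fix y assume y: "y \<in> D2" "le a y"
    show "y = a"
    proof (cases "y \<in> CC")
      case True
      have "a \<in> CC" using ds_down[OF CC_ds True aQ(1) y(2)] .
      then show ?thesis using a'A by blast
    next
      case False
      then have yL: "y \<in> L" "y \<noteq> a'" using y F(3) unfolding D2_def D1_def using tQ by auto
      then have yQ: "y \<in> Q" using LP PQ by blast
      have "le y a' \<or> le y z" using yL unfolding L_def by blast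
      then show ?thesis
      proof
        assume "le y a'" then show ?thesis using cov yQ y yL by blast
      next
        assume "le y z"
        then have "le a z" using ptrans[OF aQ(1) yQ aQ(3)] y by blast
        then show ?thesis using naz by blast
      qed
    qed
  qed
  have t2cl: "\<forall>y\<in>Q. le y t2 \<longrightarrow> y = t2 \<or> y \<in> D2 - {a}"
  proof (intro ballI impI)
    fix y assume y: "y \<in> Q" "le y t2"
    have yC: "y \<in> CC" using ds_down[OF CC_ds tQ(4) y] .
    show "y = t2 \<or> y \<in> D2 - {a}"
    proof (cases "y \<in> AA")
      case True
      then have "y \<in> XX" using yC unfolding XX_def by blast
      then show ?thesis using F(2) a'A XAC unfolding D2_def D1_def by blast
    next
      case False
      show ?thesis
      proof (cases "y \<in> F \<or> y = t1")
        case True then show ?thesis using a'A yC tQ unfolding D2_def D1_def by blast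
      next
        case False2: False
        then have "y \<in> RF - {t1}" using yC False unfolding RF_def RR_def by blast
        then show ?thesis using t2m y by blast
      qed
    qed
  qed
  define D3 where "D3 = insert t2 (D2 - {a})"
  have aD2: "a \<in> D2" using aL aa' unfolding D2_def D1_def by blast
  have t2D2: "t2 \<notin> D2" using tQ LP PA unfolding D2_def D1_def by blast
  have fD2: "finite D2" using gD2 grid_V V_fin by blast
  have D3ds: "downset Q le D3" unfolding D3_def by (rule ds_insert[OF ds_remove[OF D2ds amax] tQ(2) t2cl])
  have cD3: "card D3 = n"
  proof -
    have "card (D2 - {a}) = n - 1" using card_Diff_singleton[OF aD2] cD2 by simp
    moreover have "t2 \<notin> D2 - {a}" using t2D2 by blast
    moreover have "finite (D2 - {a})" using fD2 by simp
    ultimately show ?thesis unfolding D3_def using n0 by simp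
  qed
  have gD3: "grid D3" unfolding grid_def
    using V_I[OF D3ds cD3] gD2 tQ a'A unfolding grid_def D3_def XX_def by blast
  have s13: "D3 \<inter> AA \<subseteq> D1 \<inter> AA" "D1 - AA \<subseteq> D3 - AA" unfolding D3_def D2_def using a'A tQ by auto
  have D3mA: "D3 - AA = insert t2 (D2 - AA)" unfolding D3_def using a'A tQ by blast
  have lD3: "lvl D3 = lvl D1 + 2" unfolding lvl_def D3mA using fD2 t2D2 lD2 unfolding lvl_def by simp
  have cp3: "cpairs D2 le = cpairs (D2 - {a}) le + h a" using cp_remove[OF D2ds aD2 amax] .
  have t2max: "\<forall>y\<in>D3. le t2 y \<longrightarrow> y = t2"
  proof (intro ballI impI)
    fix y assume y: "y \<in> D3" "le t2 y"
    show "y = t2"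
    proof (rule ccontr)
      assume ne: "y \<noteq> t2"
      then have yD: "y \<in> D2" using y unfolding D3_def by blast
      show False
      proof (cases "y = t1")
        case True
        then have "t2 = t1" using t1R t2 y unfolding RF_def by blast
        then show False using tQ by blast
      next
        case False
        then have yD1: "y \<in> D1" using yD unfolding D2_def by blast
        show False
        proof (cases "y \<in> F")
          case True then show False using ds_down[OF F(1) True tQ(2) y(2)] tQ by blast
        next
          case False
          then have "y \<in> AA" using yD1 LP PA unfolding D1_def by blast
          then show False using ds_down[OF AA_ds _ tQ(2) y(2)] tQ by blast
        qed
      qed
    qed
  qed
  have t2D3: "t2 \<in> D3" unfolding D3_def by blast
  have D3t2: "D3 - {t2} = D2 - {a}" unfolding D3_def using t2D2 by blast
  have cp4: "cpairs D3 le = cpairs (D2 - {a}) le + h t2"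
    using cp_remove[OF D3ds t2D3 t2max] D3t2 by simp
  have L0ne: "L - {x0} \<noteq> {}"
  proof
    assume "L - {x0} = {}"
    then have "L \<subseteq> {x0}" by blast
    then have "card L \<le> 1" using card_mono[of "{x0}" L] by simp
    then show False using cL3 by simp
  qed
  obtain s where s: "s \<in> L - {x0}" and sm: "\<forall>y\<in>L - {x0}. le y s \<longrightarrow> y = s"
    using ex_minimal[of "L - {x0}"] L0ne fL LP PQ by blast
  have sA: "s \<in> AA" "s \<notin> CC" "s \<in> Q" "s \<noteq> x0" using s LP PA PQ by auto
  have y0C: "y0 \<in> CC" "y0 \<notin> AA" "y0 \<in> Q" using y0R PA PQ by auto
  have x0A: "x0 \<in> AA" "x0 \<notin> CC" using x0P unfolding PP_def by auto
  have y0cl: "\<forall>y\<in>Q. le y y0 \<longrightarrow> y = y0 \<or> y \<in> F"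
  proof (intro ballI impI)
    fix y assume y: "y \<in> Q" "le y y0"
    have yC: "y \<in> CC" using ds_down[OF CC_ds y0C(1) y] .
    have "y = y0 \<or> y \<in> AA - {x0}" using y0b y by blast
    then show "y = y0 \<or> y \<in> F" using yC F(2) unfolding XX_def by blast
  qed
  have Fyds: "downset Q le (insert y0 F)" by (rule ds_insert[OF F(1) y0C(3) y0cl])
  have "card (insert y0 F) \<le> Suc (card F)" using fF by (simp add: card_insert_if)
  then have cFy: "card (insert y0 F) \<le> n - 1" using F(4) nXm cLm cL3 by arith
  have FyC: "insert y0 F \<subseteq> CC" using F(3) y0C by blast
  have n1: "n - 1 \<le> card CC" using cCn by simp
  obtain FE where FE: "downset Q le FE" "insert y0 F \<subseteq> FE" "FE \<subseteq> CC" "card FE = n - 1"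
    using ds_extend[OF Fyds CC_ds FyC cFy n1] by blast
  have fFE: "finite FE" using FE(3) CC_fin finite_subset by blast
  have scl: "\<forall>y\<in>Q. le y s \<longrightarrow> y = s \<or> y \<in> FE"
  proof (intro ballI impI)
    fix y assume y: "y \<in> Q" "le y s"
    have yA: "y \<in> AA" using ds_down[OF AA_ds sA(1) y] .
    show "y = s \<or> y \<in> FE"
    proof (cases "y \<in> CC")
      case True then show ?thesis using yA F(2) FE(2) unfolding XX_def by blast
    next
      case False
      have "y \<in> XX \<union> L" using Llow s y by blast
      then have yL: "y \<in> L" using False unfolding XX_def by blast
      have "y \<noteq> x0"
      proof
        assume "y = x0"
        then have "le x0 s" using y by simp
        then show False using x0m sA by blast
      qed
      then show ?thesis using sm yL y by blast
    qed
  qed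
  define E where "E = insert s FE"
  have Eds: "downset Q le E" unfolding E_def by (rule ds_insert[OF FE(1) sA(3) scl])
  have sFE: "s \<notin> FE" using FE(3) sA by blast
  have cE: "card E = n" unfolding E_def using fFE sFE FE(4) n0 by simp
  have XFE: "XX \<subseteq> FE" using F(2) FE(2) by blast
  have gE: "grid E" unfolding grid_def E_def
    using V_I[OF Eds cE] XFE FE(3) sA unfolding E_def by blast
  have EA: "E \<inter> AA = insert s XX" unfolding E_def using FE(3) XFE sA unfolding XX_def by blast
  have EmA: "E - AA = FE - AA" unfolding E_def using sA by blast
  have FEA: "FE \<inter> AA = XX" using FE(3) XFE unfolding XX_def by blast
  have lE: "lvl E = m - 1"
  proof -
    have "card FE = card (FE \<inter> AA) + card (FE - AA)" using card_Int_Diff[OF fFE] .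
    then show ?thesis unfolding lvl_def EmA using FEA FE(4) nXm by simp
  qed
  have v1V: "vs ! 1 \<in> V" using sp_nth sp_len by simp
  have gv1: "grid (vs ! 1)" unfolding grid_def
    using v1V x0A y0C unfolding v1 XX_def by blast
  have v1mA: "vs ! 1 - AA = {y0}" unfolding v1 using y0C by blast
  have lv1: "lvl (vs ! 1) = 1" unfolding lvl_def v1mA by simp
  have v1A: "vs ! 1 \<inter> AA = AA - {x0}" unfolding v1 using y0C by blast
  have lEm: "lvl E < m" using lE lD1a by simp
  have m4: "lvl D2 < m" "lvl D3 < m" "0 < lvl D1" using lD2 lD3 lD1a by auto
  have E1: "cls (vs ! 1) = cls E"
  proof (rule MP2[OF gv1 gE _ _ _ lEm _ cl(1)[symmetric] cl(2)])
    show "E \<inter> AA \<subseteq> vs ! 1 \<inter> AA" unfolding EA v1A using sA XAC x0A by blast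
    show "vs ! 1 - AA \<subseteq> E - AA" unfolding v1mA EmA using FE(2) y0C by blast
    show "0 < lvl (vs ! 1)" using lv1 by simp
    show "cls (vs ! 1) = \<beta> \<or> cls E = \<beta>" unfolding \<beta>_def by simp
  qed
  have E2: "cls D1 = cls E"
  proof (rule MP2[OF gD1 gE _ _ m4(3) lEm _ cl(1)[symmetric] cl(2)])
    show "E \<inter> AA \<subseteq> D1 \<inter> AA" unfolding EA D1A using s XAC by blast
    show "D1 - AA \<subseteq> E - AA" unfolding D1mA EmA using FE(2) by blast
    show "cls D1 = \<beta> \<or> cls E = \<beta>" using E1 unfolding \<beta>_def by simp
  qed
  have E3: "cls D1 = cls D2"
    by (rule MP2[OF gD1 gD2 s12 m4(3) m4(1) _ cl(1)[symmetric] cl(2)]) (use E1 E2 in \<open>simp add: \<beta>_def\<close>)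
  have E4: "cls D1 = cls D3"
    by (rule MP2[OF gD1 gD3 s13 m4(3) m4(2) _ cl(1)[symmetric] cl(2)]) (use E1 E2 in \<open>simp add: \<beta>_def\<close>)
  have V123: "D1 \<in> V" "D2 \<in> V" "D3 \<in> V" using gD1 gD2 gD3 grid_V by auto
  have "cpairs D1 le = cpairs D2 le" using cls_cpairs V123 E3 by blast
  then have h1: "h a' = h t1" using cp1 cp2 by simp
  have "cpairs D2 le = cpairs D3 le" using cls_cpairs V123 E3 E4 by metis
  then have h2: "h a = h t2" using cp3 cp4 by simp
  have "h a < h a'" using h_strict[OF aQ(1) aQ(2) leaa' aa'] .
  then show False using h1 h2 ht by simp
qed



theorem A_side: "\<not> bad_partition Q le (AA - XX)"
proof
  assume "bad_partition Q le (AA - XX)"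
  then obtain a' a A1 A2 where bp: "a' \<noteq> a" "a' \<notin> A1" "a' \<notin> A2" "a \<notin> A1" "a \<notin> A2" "A1 \<inter> A2 = {}"
     "AA - XX = {a', a} \<union> A1 \<union> A2" "covers Q le a' a"
     "\<forall>x\<in>A1. le a' x \<or> incomparable le x a'" "\<forall>x\<in>A2. le x a \<or> incomparable le x a"
     "A1 \<noteq> {}" "A2 \<noteq> {}"
    unfolding bad_partition_def by blast
  have PPe: "AA - XX = PP" unfolding XX_def PP_def by blast
  have PQ: "PP \<subseteq> Q" "RR \<subseteq> Q" using AA_Q CC_Q unfolding PP_def RR_def by auto
  have fP: "finite PP" "finite RR" using AA_fin CC_fin unfolding PP_def RR_def by auto
  obtain x1 where x1: "x1 \<in> A1" using bp(11) by blast
  obtain x2 where x2: "x2 \<in> A2" using bp(12) by blast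
  have mem: "a \<in> PP" "a' \<in> PP" "x1 \<in> PP" "x2 \<in> PP" using bp(7) PPe x1 x2 by auto
  have ne: "x1 \<noteq> x2" "x1 \<noteq> a" "x1 \<noteq> a'" "x2 \<noteq> a" "x2 \<noteq> a'" using bp x1 x2 by auto
  have inQ: "a \<in> Q" "a' \<in> Q" "x1 \<in> Q" "x2 \<in> Q" using mem PQ by auto
  have leaa': "le a a'" and aa': "a \<noteq> a'" and cov: "\<forall>y\<in>Q. le a y \<and> le y a' \<longrightarrow> y = a \<or> y = a'"
    using bp(8) unfolding covers_def by auto
  have nx1: "\<not> le x1 a'"
  proof
    assume l: "le x1 a'"
    have "le a' x1 \<or> incomparable le x1 a'" using bp(9) x1 by blast
    then show False
    proof
      assume "le a' x1" then show False using pantisym[OF inQ(3) inQ(2) l] ne by blast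
    next
      assume "incomparable le x1 a'" then show False using l unfolding incomparable_def by blast
    qed
  qed
  have nx2: "\<not> le a x2"
  proof
    assume l: "le a x2"
    have "le x2 a \<or> incomparable le x2 a" using bp(10) x2 by blast
    then show False
    proof
      assume "le x2 a" then show False using pantisym[OF inQ(4) inQ(1) _ l] ne by blast
    next
      assume "incomparable le x2 a" then show False using l unfolding incomparable_def by blast
    qed
  qed
  have m4: "4 \<le> m"
  proof -
    have "{a, a', x1, x2} \<subseteq> PP" using mem by auto
    then have "card {a, a', x1, x2} \<le> card PP" using fP(1) by (rule card_mono[rotated])
    moreover have "card {a, a', x1, x2} = 4" using ne aa' by auto
    ultimately show ?thesis unfolding m_def by simp
  qed
  have mr: "m \<le> r" by (rule m_le_r)
  have r3: "3 \<le> r" using m4 mr by simp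
  have "\<exists>z w. z \<in> PP \<and> w \<in> PP \<and> z \<noteq> a \<and> z \<noteq> a' \<and> \<not> le a z \<and> \<not> le w a' \<and> \<not> le w z"
  proof (cases "le x1 x2")
    case False
    then show ?thesis using mem ne nx1 nx2 by blast
  next
    case True
    have "\<not> le a x1"
    proof
      assume "le a x1" then have "le a x2" using ptrans[OF inQ(1) inQ(3) inQ(4)] True by blast
      then show False using nx2 by blast
    qed
    moreover have "\<not> le x2 a'"
    proof
      assume "le x2 a'" then have "le x1 a'" using ptrans[OF inQ(3) inQ(4) inQ(2)] True by blast
      then show False using nx1 by blast
    qed
    moreover have "\<not> le x2 x1"
    proof
      assume "le x2 x1" then show False using pantisym[OF inQ(3) inQ(4) True] ne by blast
    qed
    ultimately show ?thesis using mem ne by blast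
  qed
  then obtain z w where zw: "z \<in> PP" "w \<in> PP" "z \<noteq> a" "z \<noteq> a'" "\<not> le a z" "\<not> le w a'" "\<not> le w z"
    by blast
  obtain x0 y0 where v: "x0 \<in> AA" "y0 \<notin> AA" "y0 \<in> Q" "vs ! 1 = insert y0 (AA - {x0})"
    "\<forall>y\<in>AA. le x0 y \<longrightarrow> y = x0" "\<forall>y\<in>Q. le y y0 \<longrightarrow> y = y0 \<or> y \<in> AA - {x0}"
    using v1_decomp by blast
  have v1V: "vs ! 1 \<in> V" using sp_nth sp_len by simp
  have cAn: "card AA = n" using AA_V V_card by blast
  have n0: "1 \<le> n" using cAn m4 cardAA by simp
  show False
  proof (cases "x0 \<notin> CC \<and> y0 \<in> CC")
    case True
    have x0P: "x0 \<in> PP" using True v unfolding PP_def by blast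
    have y0R: "y0 \<in> RR" using True v unfolding RR_def by blast
    show False by (rule caseA[OF mem(1) mem(2) zw(1) zw(2) aa' zw(3) zw(4) leaa' cov zw(5) zw(6) zw(7)
        x0P y0R v(4) v(5) v(6)])
  next
    case False
    have ng: "\<not> grid (vs ! 1)"
    proof
      assume g: "grid (vs ! 1)"
      show False
      proof (cases "x0 \<in> CC")
        case True
        then have "x0 \<in> XX" using v unfolding XX_def by blast
        moreover have "x0 \<notin> vs ! 1" unfolding v(4) using v(1,2) by blast
        ultimately show False using g unfolding grid_def by blast
      next
        case False2: False
        then have "y0 \<notin> CC" using False by blast
        then show False using g v unfolding grid_def by blast
      qed
    qed
    have dd: "card (vs ! 1 - CC) \<le> r - 1" using dist[of 1 r] r3 last_nth unfolding r_def by simp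
    have fv: "finite (vs ! 1 - CC)" using V_fin v1V by simp
    have mv: "m \<le> card (vs ! 1 - CC)"
    proof (cases "x0 \<in> CC")
      case True
      then have "PP \<subseteq> vs ! 1 - CC" unfolding v(4) using v(1,2) unfolding PP_def by blast
      then show ?thesis unfolding m_def using fv by (rule card_mono[rotated])
    next
      case False2: False
      then have y0C: "y0 \<notin> CC" using False by blast
      have x0P: "x0 \<in> PP" using False2 v unfolding PP_def by blast
      have "insert y0 (PP - {x0}) \<subseteq> vs ! 1 - CC" unfolding v(4) using v(1,2) y0C unfolding PP_def by blast
      then have "card (insert y0 (PP - {x0})) \<le> card (vs ! 1 - CC)" using fv by (rule card_mono[rotated])
      moreover have "card (insert y0 (PP - {x0})) = m"
      proof -
        have "y0 \<notin> PP - {x0}" using v unfolding PP_def by blast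
        then have "card (insert y0 (PP - {x0})) = Suc (card (PP - {x0}))" using fP by simp
        moreover have "card (PP - {x0}) = m - 1" using card_Diff_singleton[OF x0P] unfolding m_def by simp
        ultimately show ?thesis using m4 by simp
      qed
      ultimately show ?thesis by simp
    qed
    have mr': "m < r" using dd mv r3 by simp
    have a10: "exch_adj AA (vs ! 1)" using sp_adj[of 0] sp_len hd_nth by simp
    show False
    proof (cases "x0 \<in> CC")
      case x0C: True
      show False
      proof (cases "y0 \<in> CC")
        case y0C: True
        have PPne: "PP \<noteq> {}" using mem by blast
        obtain u where u: "u \<in> PP" and um: "\<forall>y\<in>PP. le u y \<longrightarrow> y = u"
          using ex_maximal[OF fP(1) PPne PQ(1)] by blast
        have uA: "u \<in> AA" "u \<notin> CC" "u \<in> Q" using u PQ unfolding PP_def by auto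
        have umA: "\<forall>y\<in>AA. le u y \<longrightarrow> y = u"
        proof (intro ballI impI)
          fix y assume y: "y \<in> AA" "le u y"
          show "y = u"
          proof (cases "y \<in> CC")
            case True
            then have "u \<in> CC" using ds_down[OF CC_ds True uA(3) y(2)] by blast
            then show ?thesis using uA by blast
          next
            case False then show ?thesis using um y unfolding PP_def by blast
          qed
        qed
        have ycl: "\<forall>y\<in>Q. le y y0 \<longrightarrow> y = y0 \<or> y \<in> AA - {u}"
        proof (intro ballI impI)
          fix y assume y: "y \<in> Q" "le y y0"
          have "y \<in> CC" using ds_down[OF CC_ds y0C y] .
          then show "y = y0 \<or> y \<in> AA - {u}" using v(6) y uA by blast
        qed
        define W where "W = insert y0 (AA - {u})"
        have Wds: "downset Q le W" unfolding W_def by (rule ds_insert[OF ds_remove[OF AA_ds umA] v(3) ycl])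
        have cW: "card W = n"
        proof -
          have "card (AA - {u}) = n - 1" using card_Diff_singleton[OF uA(1)] cAn by simp
          moreover have "y0 \<notin> AA - {u}" using v by blast
          ultimately show ?thesis unfolding W_def using AA_fin n0 by simp
        qed
        have gW: "grid W" unfolding grid_def using V_I[OF Wds cW] uA y0C unfolding W_def XX_def by blast
        have WmA: "W - AA = {y0}" unfolding W_def using v by blast
        have lW: "lvl W = 1" unfolding lvl_def WmA by simp
        have aW: "exch_adj AA W"
        proof -
          have "AA - W = {u}" unfolding W_def using uA v by blast
          then show ?thesis unfolding exch_adj_def using WmA by simp
        qed
        have vW: "exch_adj (vs ! 1) W"
        proof -
          have ux: "u \<noteq> x0" using uA x0C by blast
          have "vs ! 1 - W = {u}" unfolding W_def v(4) using uA ux v(1,2) by blast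
          moreover have "W - vs ! 1 = {x0}" unfolding W_def v(4) using v(1,2) ux x0C y0C by blast
          ultimately show ?thesis unfolding exch_adj_def by simp
        qed
        show False by (rule LW[OF gW lW aW vW ng mr' r3])
      next
        case y0C: False
        show False by (rule B3[OF ng exch_adj_sym[OF a10]]) (use mr' r3 m4 in auto)
      qed
    next
      case x0C: False
      then have y0C: "y0 \<notin> CC" using False by blast
      have RRne: "RR \<noteq> {}" using cardRR m4 by auto
      obtain t where t: "t \<in> RR" and tm: "\<forall>y\<in>RR. le y t \<longrightarrow> y = t"
        using ex_minimal[OF fP(2) RRne PQ(2)] by blast
      have tA: "t \<in> CC" "t \<notin> AA" "t \<in> Q" using t PQ unfolding RR_def by auto
      have tcl: "\<forall>y\<in>Q. le y t \<longrightarrow> y = t \<or> y \<in> AA - {x0}"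
      proof (intro ballI impI)
        fix y assume y: "y \<in> Q" "le y t"
        have yC: "y \<in> CC" using ds_down[OF CC_ds tA(1) y] .
        show "y = t \<or> y \<in> AA - {x0}"
        proof (cases "y \<in> AA")
          case True then show ?thesis using yC x0C by blast
        next
          case False then show ?thesis using tm yC y unfolding RR_def by blast
        qed
      qed
      define W where "W = insert t (AA - {x0})"
      have Wds: "downset Q le W" unfolding W_def by (rule ds_insert[OF ds_remove[OF AA_ds v(5)] tA(3) tcl])
      have cW: "card W = n"
      proof -
        have "card (AA - {x0}) = n - 1" using card_Diff_singleton[OF v(1)] cAn by simp
        moreover have "t \<notin> AA - {x0}" using tA by blast
        ultimately show ?thesis unfolding W_def using AA_fin n0 by simp
      qed
      have gW: "grid W" unfolding grid_def using V_I[OF Wds cW] x0C tA unfolding W_def XX_def by blast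
      have WmA: "W - AA = {t}" unfolding W_def using tA by blast
      have lW: "lvl W = 1" unfolding lvl_def WmA by simp
      have aW: "exch_adj AA W"
      proof -
        have "AA - W = {x0}" unfolding W_def using v(1) tA by blast
        then show ?thesis unfolding exch_adj_def using WmA by simp
      qed
      have vW: "exch_adj (vs ! 1) W"
      proof -
        have ty: "t \<noteq> y0" using tA y0C by blast
        have "vs ! 1 - W = {y0}" unfolding W_def v(4) using ty v(1,2) by blast
        moreover have "W - vs ! 1 = {t}" unfolding W_def v(4) using ty tA v(1,2) by blast
        ultimately show ?thesis unfolding exch_adj_def by simp
      qed
      show False by (rule LW[OF gW lW aW vW ng mr' r3])
    qed
  qed
qed

end

lemma special_path_rev:
  assumes sp: "special_path Q le n \<Gamma> vs"
  shows "special_path Q le n \<Gamma> (rev vs)"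
proof -
  obtain P1 P2 P3 where P: "P1 \<in> \<Gamma>" "P2 \<in> \<Gamma>" "P3 \<in> \<Gamma>" "P1 \<noteq> P2" "P2 \<noteq> P3" "P1 \<noteq> P3"
    "ord_iso (hd vs) le (fst P1) (snd P1)"
    "\<forall>i. 0 < i \<and> i < length vs - 1 \<longrightarrow> ord_iso (vs ! i) le (fst P2) (snd P2)"
    "ord_iso (last vs) le (fst P3) (snd P3)"
    using sp unfolding special_path_def by blast
  have len: "3 \<le> length vs" and adj: "\<forall>i. Suc i < length vs \<longrightarrow> exch_adj (vs ! i) (vs ! Suc i)"
    using sp unfolding special_path_def by auto
  have ne: "vs \<noteq> []" using len by auto
  show ?thesis unfolding special_path_def
  proof (intro conjI)
    show "3 \<le> length (rev vs)" using len by simp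
    show "distinct (rev vs)" using sp unfolding special_path_def by simp
    show "set (rev vs) \<subseteq> exch_vertices Q le n" using sp unfolding special_path_def by simp
    show "\<forall>i. Suc i < length (rev vs) \<longrightarrow> exch_adj (rev vs ! i) (rev vs ! Suc i)"
    proof (intro allI impI)
      fix i assume i: "Suc i < length (rev vs)"
      define j where "j = length vs - Suc (Suc i)"
      have j: "Suc j < length vs" "Suc j = length vs - Suc i" using i unfolding j_def by auto
      have "rev vs ! i = vs ! Suc j" using i j by (simp add: rev_nth)
      moreover have "rev vs ! Suc i = vs ! j" using i unfolding j_def by (simp add: rev_nth)
      ultimately show "exch_adj (rev vs ! i) (rev vs ! Suc i)"
        using adj j exch_adj_sym by metis
    qed
    show "\<exists>P1\<in>\<Gamma>. \<exists>P2\<in>\<Gamma>. \<exists>P3\<in>\<Gamma>. P1 \<noteq> P2 \<and> P2 \<noteq> P3 \<and> P1 \<noteq> P3 \<and>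
        ord_iso (hd (rev vs)) le (fst P1) (snd P1) \<and>
        (\<forall>i. 0 < i \<and> i < length (rev vs) - 1 \<longrightarrow> ord_iso (rev vs ! i) le (fst P2) (snd P2)) \<and>
        ord_iso (last (rev vs)) le (fst P3) (snd P3)"
    proof (intro bexI conjI)
      show "ord_iso (hd (rev vs)) le (fst P3) (snd P3)" using P(9) ne by (simp add: hd_rev)
      show "ord_iso (last (rev vs)) le (fst P1) (snd P1)" using P(7) ne by (simp add: last_rev)
      show "\<forall>i. 0 < i \<and> i < length (rev vs) - 1 \<longrightarrow> ord_iso (rev vs ! i) le (fst P2) (snd P2)"
      proof (intro allI impI)
        fix i assume i: "0 < i \<and> i < length (rev vs) - 1"
        have "i < length vs" using i by auto
        then have "rev vs ! i = vs ! (length vs - Suc i)" by (simp add: rev_nth)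
        moreover have "0 < length vs - Suc i" "length vs - Suc i < length vs - 1" using i by auto
        ultimately show "ord_iso (rev vs ! i) le (fst P2) (snd P2)" using P(8) by simp
      qed
    qed (use P in auto)
  qed
qed


theorem mainTheorem16:
  fixes Q :: "'a set" and le :: "'a \<Rightarrow> 'a \<Rightarrow> bool" and n :: nat
    and \<Gamma> :: "('b set \<times> ('b \<Rightarrow> 'b \<Rightarrow> bool)) set" and vs :: "'a set list"
    and A C X :: "'a set"
  assumes finQ: "finite Q"
    and posQ: "is_poset Q le"
    and card\<Gamma>: "card \<Gamma> = 3"
    and \<Gamma>_posets: "\<forall>P\<in>\<Gamma>. finite (fst P) \<and> card (fst P) = n \<and> is_poset (fst P) (snd P)"
    and \<Gamma>_noniso: "\<forall>P\<in>\<Gamma>. \<forall>P'\<in>\<Gamma>. P \<noteq> P' \<longrightarrow> \<not> ord_iso (fst P) (snd P) (fst P') (snd P')"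
    and wit: "is_witness Q le n \<Gamma>"
    and sp: "special_path Q le n \<Gamma> vs"
    and minimal: "\<forall>ws. special_path Q le n \<Gamma> ws \<longrightarrow> length vs \<le> length ws"
    and Q_union: "Q = \<Union> (set vs)"
    and A_def: "A = hd vs" and C_def: "C = last vs" and X_def: "X = A \<inter> C"
  shows "\<not> bad_partition Q le (A - X) \<and> \<not> bad_partition Q le (C - X)"
proof -
  have sp': "special_path Q le n \<Gamma> (rev vs)" by (rule special_path_rev[OF sp])
  have min': "\<forall>ws. special_path Q le n \<Gamma> ws \<longrightarrow> length (rev vs) \<le> length ws" using minimal by simp
  interpret L1: L16 Q le n \<Gamma> vs by (rule L16.intro[OF finQ posQ \<Gamma>_noniso wit sp minimal])
  interpret L2: L16 Q le n \<Gamma> "rev vs" by (rule L16.intro[OF finQ posQ \<Gamma>_noniso wit sp' min'])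
  have ne: "vs \<noteq> []" using sp unfolding special_path_def by auto
  have e1: "L1.AA - L1.XX = A - X" unfolding L1.AA_def L1.XX_def L1.CC_def A_def C_def X_def by simp
  have e2: "L2.AA - L2.XX = C - X"
    unfolding L2.AA_def L2.XX_def L2.CC_def A_def C_def X_def using ne by (auto simp: hd_rev last_rev)
  show ?thesis using L1.A_side L2.A_side e1 e2 by simp
qed

end
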